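(* Let $f(d,m)$ denote the number of $m$-tuples $(\sigma_1,\ldots,\sigma_m)$ of transpositions in $S_d$ such that, writing $\sigma_j=(a_j\,b_j)$ with $a_j<b_j$, $b_1\le b_2\le\cdots\le b_m$ (no transitivity or cycle-type condition). Then \[ Z(x,\hbar)=1+\sum_{d\ge1}\sum_{m\ge0}\frac{f(d,m)}{d!}x^d\hbar^{m-d}. \]
   Context: Monotone Hurwitz numbers $\vec H_{g,n}(\mu_1,\ldots,\mu_n)$: with $|\boldsymbol\mu|=\sum\mu_i$ and $m=2g-2+n+|\boldsymbol\mu|$, it is $\frac{1}{|\boldsymbol\mu|!}$ times the number of $m$-tuples of transpositions $(\sigma_1,\ldots,\sigma_m)$ in $S_{|\boldsymbol\mu|}$, with a labelling of the cycles of $\sigma_1\circ\cdots\circ\sigma_m$ by $1,\ldots,n$ so that cycle $i$ has length $\mu_i$, such that the $\sigma_j$ generate a transitive subgroup and, writing $\sigma_j=(a_j\,b_j)$ with $a_j<b_j$, $b_1\le\cdots\le b_m$ (zero if $m<0$). Free energy $F_{g,n}(x_1,\ldots,x_n)=\sum_{\mu_i\ge1}\vec H_{g,n}(\boldsymbol\mu)\prod x_i^{\mu_i}$. Wave function: $Z(x,\hbar)=\exp\big[\sum_{g\ge0}\sum_{n\ge1}\frac{\hbar^{2g-2+n}}{n!}F_{g,n}(x,\ldots,x)\big]\in\mathbb{Q}[[x\hbar^{-1},\hbar]]$. *)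

theory Defs
  imports "HOL-Computational_Algebra.Formal_Power_Series" "HOL-Combinatorics.Transposition"
    "HOL-Library.FuncSet"
begin

text \<open>A transposition (a b) with a < b in S_d (acting on {1..d}) is encoded by the pair (a,b);
  this encoding is a bijection onto the transpositions of S_d.\<close>

definition transp_pairs :: "nat \<Rightarrow> (nat \<times> nat) set" where
  "transp_pairs d = {(a, b). 1 \<le> a \<and> a < b \<and> b \<le> d}"

definition prod_transp :: "(nat \<times> nat) list \<Rightarrow> nat \<Rightarrow> nat" where
  "prod_transp ts = foldr (\<lambda>(a, b) p. transpose a b \<circ> p) ts id"

definition monotone_tuple :: "nat \<Rightarrow> nat \<Rightarrow> (nat \<times> nat) list set" where
  "monotone_tuple d m = {ts. length ts = m \<and> set ts \<subseteq> transp_pairs d \<and> sorted (map snd ts)}"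

text \<open>The subgroup generated by the sigma_j acts transitively on {1..d}.  Since the generators
  are involutions, the generated subgroup consists exactly of the finite products of
  generators.\<close>
definition transitive_tuple :: "nat \<Rightarrow> (nat \<times> nat) list \<Rightarrow> bool" where
  "transitive_tuple d ts \<longleftrightarrow>
     (\<forall>x\<in>{1..d}. \<forall>y\<in>{1..d}. \<exists>w\<in>lists (set ts). prod_transp w x = y)"

definition cycles_of :: "nat \<Rightarrow> (nat \<Rightarrow> nat) \<Rightarrow> nat set set" where
  "cycles_of d p = {{(p ^^ k) x | k. True} | x. x \<in> {1..d}}"

text \<open>Labellings of the cycles of p by the labels 0..n-1 (standing for 1..n) so that
  cycle with label i has length mu ! i.\<close>
definition labellings :: "nat \<Rightarrow> (nat \<Rightarrow> nat) \<Rightarrow> nat list \<Rightarrow> (nat \<Rightarrow> nat set) set" where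
  "labellings d p mu = {L \<in> {..<length mu} \<rightarrow>\<^sub>E cycles_of d p.
      bij_betw L {..<length mu} (cycles_of d p) \<and> (\<forall>i<length mu. card (L i) = mu ! i)}"

definition monotone_hurwitz :: "nat \<Rightarrow> nat list \<Rightarrow> rat" where
  "monotone_hurwitz g mu =
     (let d = sum_list mu; n = length mu; m = 2 * int g - 2 + int n + int d in
      if m < 0 then 0
      else of_nat (card {(ts, L). ts \<in> monotone_tuple d (nat m) \<and> transitive_tuple d ts
                                 \<and> L \<in> labellings d (prod_transp ts) mu}) / fact d)"

text \<open>Coefficient of x^d in F_{g,n}(x,...,x).\<close>
definition free_energy_diag_coeff :: "nat \<Rightarrow> nat \<Rightarrow> nat \<Rightarrow> rat" where
  "free_energy_diag_coeff g n d =
     (\<Sum>mu\<in>{mu. length mu = n \<and> (\<forall>i\<in>set mu. 1 \<le> i) \<and> sum_list mu = d}. monotone_hurwitz g mu)"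

text \<open>Elements of Q[[x hbar^-1, hbar]] are represented as bivariate power series in
  y = x hbar^-1 (outer variable) and hbar (inner variable): the monomial x^d hbar^k equals
  y^d hbar^(k+d).  The exponent sum_{g,n} hbar^(2g-2+n)/n! F_{g,n}(x,...,x) has coefficient of
  y^d hbar^m equal to the sum over g,n>=1 with 2g-2+n+d = m of F_{g,n}-coefficient of x^d / n!.
  The bounds g <= m and n <= d are automatic (for n > d there are no mu; 2g <= m since n,d >= 1)
  and only serve to make the sum syntactically finite.\<close>
definition log_wave :: "rat fps fps" where
  "log_wave = Abs_fps (\<lambda>d. Abs_fps (\<lambda>m.
      \<Sum>g\<in>{..m}. \<Sum>n\<in>{1..d}.
        if 2 * int g - 2 + int n + int d = int m
        then free_energy_diag_coeff g n d / fact n else 0))"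

definition exp_series :: "rat fps fps" where
  "exp_series = Abs_fps (\<lambda>k. fps_const (1 / fact k))"

text \<open>The wave function Z = exp(log_wave), via formal composition (log_wave has zero
  constant term in y).\<close>
definition wave_function :: "rat fps fps" where
  "wave_function = fps_compose exp_series log_wave"

definition f_count :: "nat \<Rightarrow> nat \<Rightarrow> nat" where
  "f_count d m = card (monotone_tuple d m)"

end

theory Submission
  imports Defs "HOL-Combinatorics.Cycles"
begin

unbundle fps_syntax


definition orb :: "(nat \<Rightarrow> nat) \<Rightarrow> nat \<Rightarrow> nat set" where
  "orb f x = {(f ^^ k) x | k. True}"

lemma cycles_of_orb: "cycles_of d p = orb p ` {1..d}"
  unfolding cycles_of_def orb_def by auto

lemma orb_self[simp]: "x \<in> orb f x"
  unfolding orb_def by (auto intro: exI[of _ 0])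

lemma orb_step: "f x \<in> orb f x"
  unfolding orb_def by (auto intro!: exI[of _ 1])

lemma orb_trans: "orb f y \<subseteq> orb f x" if yx: "y \<in> orb f x"
proof
  fix z assume "z \<in> orb f y"
  then obtain j where "z = (f ^^ j) y" unfolding orb_def by auto
  moreover obtain k where "y = (f ^^ k) x" using yx unfolding orb_def by auto
  ultimately
  have "z = (f ^^ (j + k)) x" by (simp add: funpow_add)
  then show "z \<in> orb f x" unfolding orb_def by auto
qed

lemma funpow_mult_id: "(f ^^ L) x = x \<Longrightarrow> (f ^^ (L * q)) x = x"
proof (induction q)
  case 0 then show ?case by simp
next
  case (Suc q)
  have "(f ^^ (L * Suc q)) x = (f ^^ L) ((f ^^ (L * q)) x)"
    by (simp add: funpow_add)
  then show ?case using Suc by simp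
qed

lemma funpow_mod: assumes "(f ^^ L) x = x" shows "(f ^^ k) x = (f ^^ (k mod L)) x"
proof -
  have "k = k mod L + L * (k div L)" by simp
  then have "(f ^^ k) x = (f ^^ (k mod L)) ((f ^^ (L * (k div L))) x)"
    by (metis funpow_add o_apply)
  then show ?thesis using funpow_mult_id[OF assms] by simp
qed

lemma orb_period: assumes "(f ^^ L) x = x" "0 < L"
  shows "orb f x = {(f ^^ k) x | k. k < L}"
  unfolding orb_def using funpow_mod[OF assms(1)] assms(2)
  by (auto intro: mod_less_divisor)

lemma orb_sym: assumes "permutation p" "y \<in> orb p x" shows "x \<in> orb p y"
proof -
  obtain k where k: "y = (p ^^ k) x" using assms(2) unfolding orb_def by auto
  obtain n where n: "p ^^ n = id" "n > k" using permutation_is_nilpotent'[OF assms(1)] by blast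
  have "(p ^^ (n - k)) y = (p ^^ n) x" using k n(2)
    by (metis funpow_add le_add_diff_inverse2 less_imp_le o_apply)
  then have "(p ^^ (n - k)) y = x" using n by simp
  then show ?thesis unfolding orb_def by auto
qed

lemma orb_eq: assumes "permutation p" "y \<in> orb p x" shows "orb p y = orb p x"
  using orb_trans[OF assms(2)] orb_trans[OF orb_sym[OF assms]] by blast

lemma orb_closed: assumes "f ` W \<subseteq> W" "x \<in> W" shows "orb f x \<subseteq> W"
proof -
  have "(f ^^ k) x \<in> W" for k by (induction k) (use assms in auto)
  then show ?thesis unfolding orb_def by auto
qed

lemma agree: assumes "\<And>k. Suc k < K \<Longrightarrow> q ((p ^^ k) x) = p ((p ^^ k) x)" "k < K"
  shows "(q ^^ k) x = (p ^^ k) x"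
  using assms(2) by (induction k) (use assms(1) in auto)

lemma agree_all: assumes "\<And>k. q ((p ^^ k) x) = p ((p ^^ k) x)"
  shows "orb q x = orb p x"
proof -
  have "(q ^^ k) x = (p ^^ k) x" for k
    using agree[of "Suc k" q p x k] assms by auto
  then show ?thesis unfolding orb_def by auto
qed

lemma ex_least_pos: assumes "P (n::nat)" "0 < n"
  obtains j where "P j" "0 < j" "\<And>k. 0 < k \<Longrightarrow> k < j \<Longrightarrow> \<not> P k"
proof -
  let ?Q = "\<lambda>j. 0 < j \<and> P j"
  have "?Q (LEAST j. ?Q j)" by (rule LeastI[of ?Q n]) (use assms in auto)
  moreover have "\<And>k. 0 < k \<Longrightarrow> k < (LEAST j. ?Q j) \<Longrightarrow> \<not> P k"
    using not_less_Least by blast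
  ultimately show ?thesis using that by blast
qed

lemma period_exists: assumes "permutation p" obtains L where "(p ^^ L) x = x" "0 < L"
  using permutation_is_nilpotent[OF assms] by (metis id_apply)

lemma in_orb_pos: assumes "permutation p" "y \<in> orb p x" obtains k where "(p ^^ k) x = y" "0 < k"
proof -
  obtain k where k: "(p ^^ k) x = y" using assms(2) unfolding orb_def by auto
  obtain L where L: "(p ^^ L) x = x" "0 < L" using period_exists[OF assms(1)] by blast
  have "(p ^^ (k + L)) x = y" using k L by (simp add: funpow_add)
  then show ?thesis using that L by auto
qed


lemma orb_disj: assumes "permutation p" "orb p x \<noteq> orb p y" shows "orb p x \<inter> orb p y = {}"
proof (rule ccontr)
  assume "orb p x \<inter> orb p y \<noteq> {}"
  then obtain z where "z \<in> orb p x" "z \<in> orb p y" by blast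
  then show False using orb_eq[OF assms(1)] assms(2) by metis
qed

lemma image_lt_cong: assumes "\<And>k. k < j \<Longrightarrow> f k = g k"
  shows "{f k | k. k < j} = {g k | k. k < j}"
proof -
  have "f ` {..<j} = g ` {..<j}" using assms by (intro image_cong) auto
  moreover have "{f k | k. k < j} = f ` {..<j}" "{g k | k. k < j} = g ` {..<j}" by auto
  ultimately show ?thesis by simp
qed

lemma orb_Suc_mem: "p ((p ^^ k) x) \<in> orb p x"
  unfolding orb_def by (auto intro!: exI[of _ "Suc k"])

lemma untouched:
  assumes p: "permutation p" and "x \<notin> orb p a" "x \<notin> orb p b"
  shows "orb (transpose a b \<circ> p) x = orb p x"
proof (rule agree_all)
  fix k
  have m: "p ((p ^^ k) x) \<in> orb p x" by (rule orb_Suc_mem)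
  have "p ((p ^^ k) x) \<noteq> a" using m orb_sym[OF p, of a x] assms(2) by auto
  moreover have "p ((p ^^ k) x) \<noteq> b" using m orb_sym[OF p, of b x] assms(3) by auto
  ultimately show "(transpose a b \<circ> p) ((p ^^ k) x) = p ((p ^^ k) x)" by simp
qed

lemma split_case:
  assumes p: "permutation p" and ab: "a \<noteq> b" and bo: "b \<in> orb p a"
  shows "orb (transpose a b \<circ> p) a \<union> orb (transpose a b \<circ> p) b = orb p a"
    and "orb (transpose a b \<circ> p) a \<inter> orb (transpose a b \<circ> p) b = {}"
proof -
  define q where "q = transpose a b \<circ> p"
  have pq: "permutation q" unfolding q_def by (intro permutation_compose permutation_swap_id p)
  have ao: "a \<in> orb p b" using orb_sym[OF p bo] .
  obtain j0 where "(p ^^ j0) a = b" "0 < j0" using in_orb_pos[OF p bo] by blast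
  then obtain j where j: "(p ^^ j) a = b" "0 < j" and jmin: "\<And>k. 0 < k \<Longrightarrow> k < j \<Longrightarrow> (p ^^ k) a \<noteq> b"
    using ex_least_pos[of "\<lambda>k. (p ^^ k) a = b"] by metis
  obtain i0 where "(p ^^ i0) b = a" "0 < i0" using in_orb_pos[OF p ao] by blast
  then obtain i where i: "(p ^^ i) b = a" "0 < i" and imin: "\<And>k. 0 < k \<Longrightarrow> k < i \<Longrightarrow> (p ^^ k) b \<noteq> a"
    using ex_least_pos[of "\<lambda>k. (p ^^ k) b = a"] by metis
  have na: "(p ^^ k) a \<noteq> a" if "0 < k" "k < j" for k
  proof
    assume h: "(p ^^ k) a = a"
    have "(p ^^ j) a = (p ^^ (j - k)) ((p ^^ k) a)" using that
      by (metis funpow_add le_add_diff_inverse2 less_imp_le o_apply)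
    then have "(p ^^ (j - k)) a = b" using h j by simp
    then show False using jmin[of "j - k"] that by auto
  qed
  have nb: "(p ^^ k) b \<noteq> b" if "0 < k" "k < i" for k
  proof
    assume h: "(p ^^ k) b = b"
    have "(p ^^ i) b = (p ^^ (i - k)) ((p ^^ k) b)" using that
      by (metis funpow_add le_add_diff_inverse2 less_imp_le o_apply)
    then have "(p ^^ (i - k)) b = a" using h i by simp
    then show False using imin[of "i - k"] that by auto
  qed
  have qa: "(q ^^ k) a = (p ^^ k) a" if "k < j" for k
  proof (rule agree[OF _ that])
    fix k assume "Suc k < j"
    then have "p ((p ^^ k) a) \<noteq> a" "p ((p ^^ k) a) \<noteq> b" using na[of "Suc k"] jmin[of "Suc k"] by auto
    then show "q ((p ^^ k) a) = p ((p ^^ k) a)" unfolding q_def by simp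
  qed
  have qaj: "(q ^^ j) a = a"
  proof -
    have "(q ^^ j) a = q ((q ^^ (j - 1)) a)" using j(2) by (metis Suc_diff_1 comp_apply funpow.simps(2))
    also have "\<dots> = q ((p ^^ (j - 1)) a)" using qa[of "j - 1"] j(2) by simp
    also have "\<dots> = transpose a b ((p ^^ j) a)" unfolding q_def using j(2)
      by (metis Suc_diff_1 comp_apply funpow.simps(2))
    finally show ?thesis using j by simp
  qed
  have qb: "(q ^^ k) b = (p ^^ k) b" if "k < i" for k
  proof (rule agree[OF _ that])
    fix k assume "Suc k < i"
    then have "p ((p ^^ k) b) \<noteq> a" "p ((p ^^ k) b) \<noteq> b" using nb[of "Suc k"] imin[of "Suc k"] by auto
    then show "q ((p ^^ k) b) = p ((p ^^ k) b)" unfolding q_def by simp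
  qed
  have qbi: "(q ^^ i) b = b"
  proof -
    have "(q ^^ i) b = q ((q ^^ (i - 1)) b)" using i(2) by (metis Suc_diff_1 comp_apply funpow.simps(2))
    also have "\<dots> = q ((p ^^ (i - 1)) b)" using qb[of "i - 1"] i(2) by simp
    also have "\<dots> = transpose a b ((p ^^ i) b)" unfolding q_def using i(2)
      by (metis Suc_diff_1 comp_apply funpow.simps(2))
    finally show ?thesis using i by simp
  qed
  have O1: "orb q a = {(p ^^ k) a | k. k < j}"
    using orb_period[OF qaj j(2)] image_lt_cong[of j "\<lambda>k. (q ^^ k) a" "\<lambda>k. (p ^^ k) a"] qa by auto
  have O2: "orb q b = {(p ^^ k) b | k. k < i}"
    using orb_period[OF qbi i(2)] image_lt_cong[of i "\<lambda>k. (q ^^ k) b" "\<lambda>k. (p ^^ k) b"] qb by auto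
  have shift: "(p ^^ (k + j)) a = (p ^^ k) b" for k using j by (simp add: funpow_add)
  have "(p ^^ (i + j)) a = a" using shift[of i] i by simp
  then have Op: "orb p a = {(p ^^ k) a | k. k < i + j}" using orb_period i(2) by auto
  show "orb q a \<union> orb q b = orb p a"
  proof (intro equalityI subsetI)
    fix z assume "z \<in> orb q a \<union> orb q b"
    then show "z \<in> orb p a" unfolding O1 O2 Op
    proof
      assume "z \<in> {(p ^^ k) a | k. k < j}" then show "z \<in> {(p ^^ k) a | k. k < i + j}" by force
    next
      assume "z \<in> {(p ^^ k) b | k. k < i}"
      then obtain k where "z = (p ^^ k) b" "k < i" by auto
      then show "z \<in> {(p ^^ k) a | k. k < i + j}" using shift[of k] by (auto intro!: exI[of _ "k + j"])
    qed
  next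
    fix z assume "z \<in> orb p a"
    then obtain k where k: "z = (p ^^ k) a" "k < i + j" unfolding Op by auto
    show "z \<in> orb q a \<union> orb q b"
    proof (cases "k < j")
      case True then show ?thesis unfolding O1 using k by auto
    next
      case False
      then have "z = (p ^^ (k - j)) b" using shift[of "k - j"] k by simp
      then show ?thesis unfolding O2 using k False by auto
    qed
  qed
  have bnot: "b \<notin> orb q a"
  proof
    assume "b \<in> orb q a"
    then obtain k where "b = (p ^^ k) a" "k < j" unfolding O1 by auto
    then show False using jmin[of k] ab by (cases "k = 0") auto
  qed
  show "orb q a \<inter> orb q b = {}"
  proof (rule ccontr)
    assume "orb q a \<inter> orb q b \<noteq> {}"
    then obtain z where "z \<in> orb q a" "z \<in> orb q b" by blast
    then have "orb q a = orb q b" using orb_eq[OF pq] by metis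
    then show False using bnot by auto
  qed
qed

lemma merge_case:
  assumes p: "permutation p" and bo: "b \<notin> orb p a"
  shows "orb (transpose a b \<circ> p) a = orb p a \<union> orb p b"
proof -
  define q where "q = transpose a b \<circ> p"
  have ao: "a \<notin> orb p b" using orb_sym[OF p] bo by blast
  obtain L0 where "(p ^^ L0) a = a" "0 < L0" using period_exists[OF p] by blast
  then obtain La where La: "(p ^^ La) a = a" "0 < La" and Lamin: "\<And>k. 0 < k \<Longrightarrow> k < La \<Longrightarrow> (p ^^ k) a \<noteq> a"
    using ex_least_pos[of "\<lambda>k. (p ^^ k) a = a"] by metis
  obtain M0 where "(p ^^ M0) b = b" "0 < M0" using period_exists[OF p] by blast
  then obtain Lb where Lb: "(p ^^ Lb) b = b" "0 < Lb" and Lbmin: "\<And>k. 0 < k \<Longrightarrow> k < Lb \<Longrightarrow> (p ^^ k) b \<noteq> b"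
    using ex_least_pos[of "\<lambda>k. (p ^^ k) b = b"] by metis
  have qa: "(q ^^ k) a = (p ^^ k) a" if "k < La" for k
  proof (rule agree[OF _ that])
    fix k assume "Suc k < La"
    moreover have "(p ^^ Suc k) a \<noteq> b" using bo unfolding orb_def by blast
    ultimately have "p ((p ^^ k) a) \<noteq> a" "p ((p ^^ k) a) \<noteq> b" using Lamin[of "Suc k"] by auto
    then show "q ((p ^^ k) a) = p ((p ^^ k) a)" unfolding q_def by simp
  qed
  have qb: "(q ^^ k) b = (p ^^ k) b" if "k < Lb" for k
  proof (rule agree[OF _ that])
    fix k assume "Suc k < Lb"
    moreover have "(p ^^ Suc k) b \<noteq> a" using ao unfolding orb_def by blast
    ultimately have "p ((p ^^ k) b) \<noteq> a" "p ((p ^^ k) b) \<noteq> b" using Lbmin[of "Suc k"] by auto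
    then show "q ((p ^^ k) b) = p ((p ^^ k) b)" unfolding q_def by simp
  qed
  have qaL: "(q ^^ La) a = b"
  proof -
    have "(q ^^ La) a = q ((q ^^ (La - 1)) a)" using La(2) by (metis Suc_diff_1 comp_apply funpow.simps(2))
    also have "\<dots> = q ((p ^^ (La - 1)) a)" using qa[of "La - 1"] La(2) by simp
    also have "\<dots> = transpose a b ((p ^^ La) a)" unfolding q_def using La(2)
      by (metis Suc_diff_1 comp_apply funpow.simps(2))
    finally show ?thesis using La by simp
  qed
  have s1: "orb p a \<subseteq> orb q a"
  proof
    fix z assume "z \<in> orb p a"
    then obtain k where "z = (p ^^ k) a" "k < La" using orb_period[OF La] by auto
    then have "z = (q ^^ k) a" using qa by simp
    then show "z \<in> orb q a" unfolding orb_def by auto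
  qed
  have "b \<in> orb q a" using qaL unfolding orb_def by auto
  then have s2: "orb q b \<subseteq> orb q a" by (rule orb_trans)
  have s3: "orb p b \<subseteq> orb q b"
  proof
    fix z assume "z \<in> orb p b"
    then obtain k where "z = (p ^^ k) b" "k < Lb" using orb_period[OF Lb] by auto
    then have "z = (q ^^ k) b" using qb by simp
    then show "z \<in> orb q b" unfolding orb_def by auto
  qed
  have s4: "orb q a \<subseteq> orb p a \<union> orb p b"
  proof (rule orb_closed)
    show "q ` (orb p a \<union> orb p b) \<subseteq> orb p a \<union> orb p b"
    proof
      fix z assume "z \<in> q ` (orb p a \<union> orb p b)"
      then obtain y where y: "y \<in> orb p a \<union> orb p b" "z = transpose a b (p y)" unfolding q_def by auto
      have "p y \<in> orb p a \<union> orb p b" using y(1) orb_trans[of y p] orb_step[of p y] by blast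
      then show "z \<in> orb p a \<union> orb p b" using y(2)
        by (cases "p y = a"; cases "p y = b") auto
    qed
  qed simp
  show ?thesis unfolding q_def[symmetric] using s1 s2 s3 s4 by blast
qed

lemma card_cycles_transpose:
  assumes p: "permutation p" and ab: "a \<noteq> b" and a: "a \<in> {1..d}" and b: "b \<in> {1..d}"
  shows "int (card (orb (transpose a b \<circ> p) ` {1..d})) =
    int (card (orb p ` {1..d})) + (if b \<in> orb p a then 1 else -1)"
proof -
  define q where "q = transpose a b \<circ> p"
  have pq: "permutation q" unfolding q_def by (intro permutation_compose permutation_swap_id p)
  define C where "C = orb p ` {1..d}"
  define C' where "C' = orb q ` {1..d}"
  have fC: "finite C" unfolding C_def by simp
  have disjC: "z \<inter> orb p a = {}" "z \<inter> orb p b = {}" if "z \<in> C - {orb p a, orb p b}" for z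
    using that orb_disj[OF p] unfolding C_def by blast+
  show ?thesis
  proof (cases "b \<in> orb p a")
    case True
    have U: "orb q a \<union> orb q b = orb p a" and D: "orb q a \<inter> orb q b = {}"
      using split_case[OF p ab True] unfolding q_def by auto
    have Ob: "orb p b = orb p a" using orb_eq[OF p True] .
    have eq: "C' = insert (orb q a) (insert (orb q b) (C - {orb p a}))"
    proof (intro equalityI subsetI)
      fix z assume "z \<in> C'"
      then obtain x where x: "x \<in> {1..d}" "z = orb q x" unfolding C'_def by auto
      show "z \<in> insert (orb q a) (insert (orb q b) (C - {orb p a}))"
      proof (cases "x \<in> orb p a")
        case True
        then have "x \<in> orb q a \<or> x \<in> orb q b" using U by auto
        then show ?thesis using x orb_eq[OF pq] by blast
      next
        case False
        then have "orb q x = orb p x" unfolding q_def using untouched[OF p] Ob by auto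
        moreover have "orb p x \<noteq> orb p a" using False orb_self[of x p] by auto
        ultimately show ?thesis using x unfolding C_def by auto
      qed
    next
      fix z assume z: "z \<in> insert (orb q a) (insert (orb q b) (C - {orb p a}))"
      show "z \<in> C'"
      proof (cases "z = orb q a \<or> z = orb q b")
        case True then show ?thesis using a b unfolding C'_def by auto
      next
        case False
        then have "z \<in> C - {orb p a}" using z by auto
        then obtain x where x: "x \<in> {1..d}" "z = orb p x" "orb p x \<noteq> orb p a" unfolding C_def by blast
        have "x \<notin> orb p a" using x(3) orb_eq[OF p] by blast
        then have "orb q x = orb p x" unfolding q_def using untouched[OF p] Ob by auto
        then show ?thesis using x unfolding C'_def by auto
      qed
    qed
    have n1: "orb q a \<notin> C - {orb p a}" "orb q b \<notin> C - {orb p a}"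
    proof -
      have "a \<in> orb q a" "b \<in> orb q b" by auto
      moreover have "a \<in> orb p a" "b \<in> orb p a" using True by auto
      moreover have "z \<inter> orb p a = {}" if "z \<in> C - {orb p a}" for z using disjC[of z] that Ob by auto
      ultimately show "orb q a \<notin> C - {orb p a}" "orb q b \<notin> C - {orb p a}" using U by blast+
    qed
    have n2: "orb q a \<noteq> orb q b" using D orb_self[of a q] by blast
    have "orb p a \<in> C" using a unfolding C_def by auto
    then have "card (C - {orb p a}) = card C - 1" "card C \<ge> 1" using fC
      by (simp add: card_Diff_singleton, metis One_nat_def Suc_leI card_gt_0_iff empty_iff)
    then have "card C' = card C + 1" unfolding eq using n1 n2 fC by (simp add: card_insert_if)
    then show ?thesis using True unfolding C_def C'_def q_def by simp
  next
    case False
    have W: "orb q a = orb p a \<union> orb p b" using merge_case[OF p False] unfolding q_def .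
    have eq: "C' = insert (orb q a) (C - {orb p a, orb p b})"
    proof (intro equalityI subsetI)
      fix z assume "z \<in> C'"
      then obtain x where x: "x \<in> {1..d}" "z = orb q x" unfolding C'_def by auto
      show "z \<in> insert (orb q a) (C - {orb p a, orb p b})"
      proof (cases "x \<in> orb p a \<or> x \<in> orb p b")
        case True
        then have "x \<in> orb q a" using W by auto
        then show ?thesis using x orb_eq[OF pq] by blast
      next
        case False
        then have "orb q x = orb p x" unfolding q_def using untouched[OF p] by auto
        moreover have "orb p x \<noteq> orb p a" "orb p x \<noteq> orb p b" using False orb_self[of x p] by auto
        ultimately show ?thesis using x unfolding C_def by auto
      qed
    next
      fix z assume z: "z \<in> insert (orb q a) (C - {orb p a, orb p b})"
      show "z \<in> C'"
      proof (cases "z = orb q a")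
        case True then show ?thesis using a unfolding C'_def by auto
      next
        case False
        then have "z \<in> C - {orb p a, orb p b}" using z by auto
        then obtain x where x: "x \<in> {1..d}" "z = orb p x" "orb p x \<noteq> orb p a" "orb p x \<noteq> orb p b"
          unfolding C_def by blast
        have "x \<notin> orb p a" "x \<notin> orb p b" using x(3,4) orb_eq[OF p] by blast+
        then have "orb q x = orb p x" unfolding q_def using untouched[OF p] by auto
        then show ?thesis using x unfolding C'_def by auto
      qed
    qed
    have n1: "orb q a \<notin> C - {orb p a, orb p b}"
    proof
      assume "orb q a \<in> C - {orb p a, orb p b}"
      then have "orb q a \<inter> orb p a = {}" by (rule disjC(1))
      moreover have "a \<in> orb q a \<inter> orb p a" using W by auto
      ultimately show False by blast
    qed
    have AB: "orb p a \<noteq> orb p b" using False orb_self[of b p] by auto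
    have "orb p a \<in> C" "orb p b \<in> C" using a b unfolding C_def by auto
    then have "card (C - {orb p a, orb p b}) = card C - 2" "card C \<ge> 2" using fC AB
      apply (simp add: card_Diff_subset)
      using fC AB \<open>orb p a \<in> C\<close> \<open>orb p b \<in> C\<close>
      by (metis card_2_iff card_mono empty_subsetI insert_subset)
    then have "card C' = card C - 1" unfolding eq using n1 fC by (simp add: card_insert_if)
    then show ?thesis using False \<open>card C \<ge> 2\<close> unfolding C_def C'_def q_def by simp
  qed
qed



definition E :: "(nat \<times> nat) list \<Rightarrow> (nat \<times> nat) set" where
  "E ts = set ts \<union> (set ts)\<inverse>"

lemma sym_E: "sym ((E ts)\<^sup>*)"
  unfolding E_def by (intro sym_rtrancl sym_Un_converse)

lemma E_sym: "(x, y) \<in> (E ts)\<^sup>* \<Longrightarrow> (y, x) \<in> (E ts)\<^sup>*"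
  using sym_E by (metis symD)

lemma prod_transp_Nil[simp]: "prod_transp [] = id"
  unfolding prod_transp_def by simp

lemma prod_transp_Cons[simp]: "prod_transp ((a, b) # ts) = transpose a b \<circ> prod_transp ts"
  unfolding prod_transp_def by simp

lemma permutation_prod_transp: "permutation (prod_transp ts)"
proof (induction ts)
  case Nil then show ?case by (simp add: permutation_id)
next
  case (Cons e ts) then show ?case
    by (cases e) (simp only: prod_transp_Cons permutation_compose permutation_swap_id)
qed

lemma word_reach: "w \<in> lists (set ts) \<Longrightarrow> (x, prod_transp w x) \<in> (E ts)\<^sup>*"
proof (induction w)
  case Nil then show ?case by simp
next
  case (Cons e w)
  obtain a b where e: "e = (a, b)" by fastforce
  have ab: "(a, b) \<in> set ts" using Cons.prems e by auto
  let ?z = "prod_transp w x"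
  have IH: "(x, ?z) \<in> (E ts)\<^sup>*" using Cons by auto
  have "(?z, transpose a b ?z) \<in> (E ts)\<^sup>*"
  proof (cases "?z = a \<or> ?z = b")
    case True
    then have "(?z, transpose a b ?z) \<in> E ts" using ab unfolding E_def by auto
    then show ?thesis by blast
  next
    case False then show ?thesis by simp
  qed
  then show ?case using IH e by simp
qed

lemma reach_word: "(x, y) \<in> (E ts)\<^sup>* \<Longrightarrow> \<exists>w\<in>lists (set ts). prod_transp w x = y"
proof (induction rule: rtrancl_induct)
  case base then show ?case by (auto intro!: bexI[of _ "[]"])
next
  case (step y z)
  then obtain w where w: "w \<in> lists (set ts)" "prod_transp w x = y" by blast
  from step(2) have "(y, z) \<in> set ts \<or> (z, y) \<in> set ts" unfolding E_def by auto
  then show ?case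
  proof
    assume h: "(y, z) \<in> set ts"
    show ?thesis using w h by (auto intro!: bexI[of _ "(y, z) # w"])
  next
    assume h: "(z, y) \<in> set ts"
    show ?thesis using w h by (auto intro!: bexI[of _ "(z, y) # w"])
  qed
qed

lemma transitive_iff: "transitive_tuple d ts \<longleftrightarrow> (\<forall>x\<in>{1..d}. \<forall>y\<in>{1..d}. (x, y) \<in> (E ts)\<^sup>*)"
proof -
  have "(\<exists>w\<in>lists (set ts). prod_transp w x = y) \<longleftrightarrow> (x, y) \<in> (E ts)\<^sup>*" for x y
  proof
    assume "\<exists>w\<in>lists (set ts). prod_transp w x = y"
    then obtain w where "w \<in> lists (set ts)" "prod_transp w x = y" by blast
    then show "(x, y) \<in> (E ts)\<^sup>*" using word_reach[of w ts x] by simp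
  qed (rule reach_word)
  then show ?thesis unfolding transitive_tuple_def by simp
qed



lemma orb_reach: "z \<in> orb (prod_transp ts) x \<Longrightarrow> (x, z) \<in> (E ts)\<^sup>*"
proof -
  have step: "(y, prod_transp ts y) \<in> (E ts)\<^sup>*" for y
    using word_reach[of ts ts y] by (simp add: in_listsI)
  have "(x, (prod_transp ts ^^ k) x) \<in> (E ts)\<^sup>*" for k
  proof (induction k)
    case 0 then show ?case by simp
  next
    case (Suc k) then show ?case using step[of "(prod_transp ts ^^ k) x"]
      by (simp add: rtrancl_trans)
  qed
  then show "z \<in> orb (prod_transp ts) x \<Longrightarrow> (x, z) \<in> (E ts)\<^sup>*" unfolding orb_def by auto
qed

definition cls :: "(nat \<times> nat) set \<Rightarrow> nat \<Rightarrow> nat set" where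
  "cls R x = {y. (x, y) \<in> R}"

lemma cls_eq: assumes "y \<in> cls ((E ts)\<^sup>*) x" shows "cls ((E ts)\<^sup>*) y = cls ((E ts)\<^sup>*) x"
  using assms E_sym unfolding cls_def by (blast intro: rtrancl_trans)

lemma cls_self[simp]: "x \<in> cls ((E ts)\<^sup>*) x" unfolding cls_def by simp

lemma cls_disj: "cls ((E ts)\<^sup>*) x \<noteq> cls ((E ts)\<^sup>*) y \<Longrightarrow> cls ((E ts)\<^sup>*) x \<inter> cls ((E ts)\<^sup>*) y = {}"
  using cls_eq by blast

lemma E_Cons: "E ((a, b) # ts) = E ts \<union> {(a, b), (b, a)}"
  unfolding E_def by auto

lemma reach_Cons_char:
  "(x, y) \<in> (E ((a, b) # ts))\<^sup>* \<longleftrightarrow>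
    (x, y) \<in> (E ts)\<^sup>* \<or> ((x, a) \<in> (E ts)\<^sup>* \<and> (b, y) \<in> (E ts)\<^sup>*) \<or> ((x, b) \<in> (E ts)\<^sup>* \<and> (a, y) \<in> (E ts)\<^sup>*)"
  (is "?L \<longleftrightarrow> ?R")
proof
  assume ?L
  then show ?R unfolding E_Cons
  proof (induction rule: rtrancl_induct)
    case base then show ?case by simp
  next
    case (step y z)
    from step(2) show ?case
    proof
      assume "(y, z) \<in> E ts"
      then show ?case using step(3) by (blast intro: rtrancl_into_rtrancl)
    next
      assume "(y, z) \<in> {(a, b), (b, a)}"
      then show ?case using step(3) by auto
    qed
  qed
next
  have sub: "(E ts)\<^sup>* \<subseteq> (E ((a, b) # ts))\<^sup>*" unfolding E_Cons by (rule rtrancl_mono) auto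
  have ab: "(a, b) \<in> (E ((a, b) # ts))\<^sup>*" "(b, a) \<in> (E ((a, b) # ts))\<^sup>*" unfolding E_Cons by auto
  assume ?R
  then show ?L using sub ab by (blast intro: rtrancl_trans)
qed

lemma reach_Cons_same: assumes "(a, b) \<in> (E ts)\<^sup>*" shows "(E ((a, b) # ts))\<^sup>* = (E ts)\<^sup>*"
proof (intro set_eqI iffI)
  fix p assume "p \<in> (E ((a, b) # ts))\<^sup>*"
  moreover obtain x y where "p = (x, y)" by fastforce
  moreover have "(b, a) \<in> (E ts)\<^sup>*" using E_sym assms by blast
  ultimately show "p \<in> (E ts)\<^sup>*" using assms reach_Cons_char[of x y a b ts]
    by (meson rtrancl_trans)
next
  fix p assume "p \<in> (E ts)\<^sup>*"
  moreover obtain x y where "p = (x, y)" by fastforce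
  ultimately show "p \<in> (E ((a, b) # ts))\<^sup>*" using reach_Cons_char[of x y a b ts] by auto
qed



lemma card_cls_merge:
  assumes nab: "(a, b) \<notin> (E ts)\<^sup>*" and a: "a \<in> {1..d}" and b: "b \<in> {1..d}"
  shows "card (cls ((E ((a, b) # ts))\<^sup>*) ` {1..d}) = card (cls ((E ts)\<^sup>*) ` {1..d}) - 1"
    and "card (cls ((E ts)\<^sup>*) ` {1..d}) \<ge> 2"
proof -
  let ?c = "cls ((E ts)\<^sup>*)" and ?c' = "cls ((E ((a, b) # ts))\<^sup>*)"
  define C where "C = ?c ` {1..d}"
  have fC: "finite C" unfolding C_def by simp
  have c': "?c' x = (if x \<in> ?c a \<union> ?c b then ?c a \<union> ?c b else ?c x)" for x
  proof (cases "x \<in> ?c a \<union> ?c b")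
    case True
    then have h: "(a, x) \<in> (E ts)\<^sup>* \<or> (b, x) \<in> (E ts)\<^sup>*" unfolding cls_def by blast
    have "?c' x = ?c a \<union> ?c b"
    proof (intro set_eqI)
      fix y
      show "y \<in> ?c' x \<longleftrightarrow> y \<in> ?c a \<union> ?c b"
        unfolding cls_def mem_Collect_eq Un_iff reach_Cons_char
        using h E_sym[of a x ts] E_sym[of b x ts] E_sym[of x y ts] E_sym[of a b ts] rtrancl_trans[of _ _ "E ts"]
        by metis
    qed
    then show ?thesis using True by simp
  next
    case False
    then have "(x, a) \<notin> (E ts)\<^sup>*" "(x, b) \<notin> (E ts)\<^sup>*" unfolding cls_def using E_sym by blast+
    then have "?c' x = ?c x" unfolding cls_def reach_Cons_char by simp
    then show ?thesis using False by simp
  qed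
  have disjC: "z \<inter> ?c a = {}" "z \<inter> ?c b = {}" if "z \<in> C - {?c a, ?c b}" for z
    using that cls_disj unfolding C_def by blast+
  have eq: "?c' ` {1..d} = insert (?c a \<union> ?c b) (C - {?c a, ?c b})"
  proof (intro equalityI subsetI)
    fix z assume "z \<in> ?c' ` {1..d}"
    then obtain x where x: "x \<in> {1..d}" "z = ?c' x" by auto
    show "z \<in> insert (?c a \<union> ?c b) (C - {?c a, ?c b})"
    proof (cases "x \<in> ?c a \<union> ?c b")
      case True then show ?thesis using x c' by auto
    next
      case False
      then have "?c x \<noteq> ?c a" "?c x \<noteq> ?c b" using cls_self[of x ts] by auto
      then show ?thesis using x c' False unfolding C_def by auto
    qed
  next
    fix z assume z: "z \<in> insert (?c a \<union> ?c b) (C - {?c a, ?c b})"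
    show "z \<in> ?c' ` {1..d}"
    proof (cases "z = ?c a \<union> ?c b")
      case True then show ?thesis using a c'[of a] by (auto intro!: image_eqI[of _ _ a])
    next
      case False
      then have "z \<in> C - {?c a, ?c b}" using z by auto
      then obtain x where x: "x \<in> {1..d}" "z = ?c x" "?c x \<noteq> ?c a" "?c x \<noteq> ?c b"
        unfolding C_def by blast
      have "x \<notin> ?c a \<union> ?c b" using x(3,4) cls_eq by blast
      then show ?thesis using x c'[of x] by auto
    qed
  qed
  have n1: "?c a \<union> ?c b \<notin> C - {?c a, ?c b}"
  proof
    assume "?c a \<union> ?c b \<in> C - {?c a, ?c b}"
    then have "(?c a \<union> ?c b) \<inter> ?c a = {}" by (rule disjC(1))
    then show False using cls_self[of a ts] by blast
  qed
  have AB: "?c a \<noteq> ?c b" using nab cls_self[of b ts] unfolding cls_def by auto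
  have inC: "?c a \<in> C" "?c b \<in> C" using a b unfolding C_def by auto
  have "card (C - {?c a, ?c b}) = card C - 2" using fC AB inC by (simp add: card_Diff_subset)
  moreover have ge: "card C \<ge> 2" using fC AB inC
    by (metis card_2_iff card_mono empty_subsetI insert_subset)
  then show "card (?c ` {1..d}) \<ge> 2" unfolding C_def .
  ultimately show "card (?c' ` {1..d}) = card (?c ` {1..d}) - 1"
    using fC AB inC unfolding eq C_def[symmetric] using n1 by (simp add: card_insert_if)
qed



lemma orb_id: "orb id x = {x}" unfolding orb_def by (simp add: id_funpow)

lemma rh_invariant: assumes "set ts \<subseteq> transp_pairs d"
  shows "int (card (orb (prod_transp ts) ` {1..d})) + int d \<le> int (length ts) + 2 * int (card (cls ((E ts)\<^sup>*) ` {1..d}))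
    \<and> even (card (orb (prod_transp ts) ` {1..d}) + length ts + d)"
  using assms
proof (induction ts)
  case Nil
  have "card (orb (prod_transp []) ` {1..d}) = d"
    by (simp add: orb_id card_image inj_on_def)
  moreover have "cls ((E [])\<^sup>*) = (\<lambda>x. {x})" unfolding E_def cls_def by auto
  then have "card (cls ((E [])\<^sup>*) ` {1..d}) = d" by (simp add: card_image inj_on_def)
  ultimately show ?case by (simp del: prod_transp_Nil)
next
  case (Cons e ts)
  obtain a b where e: "e = (a, b)" by fastforce
  have ab: "1 \<le> a" "a < b" "b \<le> d" using Cons.prems e unfolding transp_pairs_def by auto
  have sub: "set ts \<subseteq> transp_pairs d" using Cons.prems by auto
  note IH = Cons.IH[OF sub]
  define p where "p = prod_transp ts"
  have pp: "permutation p" unfolding p_def by (rule permutation_prod_transp)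
  have N: "int (card (orb (transpose a b \<circ> p) ` {1..d})) =
    int (card (orb p ` {1..d})) + (if b \<in> orb p a then 1 else -1)"
    using card_cycles_transpose[OF pp, of a b d] ab by auto
  have P': "prod_transp ((a, b) # ts) = transpose a b \<circ> p" by (simp add: p_def)
  define n0 where "n0 = card (orb p ` {1..d})"
  define n1 where "n1 = card (orb (transpose a b \<circ> p) ` {1..d})"
  define k0 where "k0 = card (cls ((E ts)\<^sup>*) ` {1..d})"
  define k1 where "k1 = card (cls ((E ((a, b) # ts))\<^sup>*) ` {1..d})"
  have IH': "int n0 + int d \<le> int (length ts) + 2 * int k0" "even (n0 + length ts + d)"
    using IH unfolding n0_def k0_def p_def by auto
  have par: "even (n1 + Suc (length ts) + d)"
  proof -
    have "int n1 = int n0 + 1 \<or> int n1 = int n0 - 1" using N unfolding n0_def n1_def by auto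
    then show ?thesis using IH'(2) by presburger
  qed
  have ineq: "int n1 + int d \<le> int (Suc (length ts)) + 2 * int k1"
  proof (cases "(a, b) \<in> (E ts)\<^sup>*")
    case True
    have "k1 = k0" unfolding k1_def k0_def using reach_Cons_same[OF True] by simp
    moreover have "int n1 \<le> int n0 + 1" using N unfolding n0_def n1_def by auto
    ultimately show ?thesis using IH'(1) by simp
  next
    case False
    have nb: "b \<notin> orb p a" using False orb_reach unfolding p_def by blast
    have "k1 = k0 - 1" "k0 \<ge> 2"
      using card_cls_merge[OF False, of d] ab unfolding k0_def k1_def by auto
    moreover have "int n1 = int n0 - 1" using N nb unfolding n0_def n1_def by auto
    ultimately show ?thesis using IH'(1) by linarith
  qed
  show ?case unfolding e P' length_Cons using par ineq unfolding n1_def k1_def by blast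
qed

lemma rh:
  assumes "ts \<in> monotone_tuple d m" "transitive_tuple d ts" "1 \<le> d"
  defines "n \<equiv> card (cycles_of d (prod_transp ts))"
  shows "1 \<le> n" "n \<le> d" "n + d \<le> m + 2" "even (n + m + d)"
proof -
  have st: "set ts \<subseteq> transp_pairs d" and len: "length ts = m" using assms(1) unfolding monotone_tuple_def by auto
  have tr: "\<forall>x\<in>{1..d}. \<forall>y\<in>{1..d}. (x, y) \<in> (E ts)\<^sup>*" using assms(2) transitive_iff by blast
  have "cls ((E ts)\<^sup>*) ` {1..d} = {cls ((E ts)\<^sup>*) 1}"
  proof -
    have "cls ((E ts)\<^sup>*) x = cls ((E ts)\<^sup>*) 1" if "x \<in> {1..d}" for x
    proof -
      have "(x, 1) \<in> (E ts)\<^sup>*" using tr that assms(3) by simp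
      then have "1 \<in> cls ((E ts)\<^sup>*) x" unfolding cls_def by simp
      then show ?thesis by (rule cls_eq[symmetric])
    qed
    then have "cls ((E ts)\<^sup>*) ` {1..d} = (\<lambda>_. cls ((E ts)\<^sup>*) 1) ` {1..d}"
      by (rule image_cong[OF refl])
    moreover have "(1::nat) \<in> {1..d}" using assms(3) by simp
    ultimately show ?thesis by (simp only: image_constant)
  qed
  then have k: "card (cls ((E ts)\<^sup>*) ` {1..d}) = 1" by simp
  have n: "n = card (orb (prod_transp ts) ` {1..d})" unfolding n_def cycles_of_orb ..
  show "n + d \<le> m + 2" "even (n + m + d)" using rh_invariant[OF st] k len unfolding n[symmetric] by auto
  show "1 \<le> n" unfolding n using assms(3)
    by (metis One_nat_def Suc_leI atLeastAtMost_iff card_gt_0_iff empty_iff finite_atLeastAtMost finite_imageI image_is_empty le_refl)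
  show "n \<le> d" unfolding n using card_image_le[of "{1..d}" "orb (prod_transp ts)"] by simp
qed


lemma prod_transp_permutes: "set ts \<subseteq> transp_pairs d \<Longrightarrow> prod_transp ts permutes {1..d}"
proof (induction ts)
  case Nil then show ?case by (simp only: prod_transp_Nil permutes_id)
next
  case (Cons e ts)
  obtain a b where e: "e = (a, b)" by fastforce
  have "a \<in> {1..d}" "b \<in> {1..d}" using Cons.prems e unfolding transp_pairs_def by auto
  then have "transpose a b permutes {1..d}" by (rule permutes_swap_id)
  moreover have "prod_transp ts permutes {1..d}" using Cons by auto
  ultimately show ?case unfolding e prod_transp_Cons by (rule permutes_compose[rotated])
qed

lemma card_bij_ext: assumes "finite C" "card C = n"
  shows "card {L \<in> {..<n} \<rightarrow>\<^sub>E C. bij_betw L {..<n} C} = fact n"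
proof -
  obtain g where g0: "bij_betw g {0..<n} C" using ex_bij_betw_nat_finite[OF assms(1)] assms(2) by blast
  have g: "bij_betw g {..<n} C" using g0 by (simp add: atLeast0LessThan)
  define P where "P = {\<sigma>. \<sigma> permutes {..<n}}"
  define B where "B = {L \<in> {..<n} \<rightarrow>\<^sub>E C. bij_betw L {..<n} C}"
  define \<phi> where "\<phi> = (\<lambda>\<sigma>. restrict (g \<circ> \<sigma>) {..<n})"
  define \<psi> where "\<psi> = (\<lambda>L i. if i < n then inv_into {..<n} g (L i) else i)"
  have ig: "bij_betw (inv_into {..<n} g) C {..<n}" using g by (rule bij_betw_inv_into)
  have "bij_betw \<phi> P B"
  proof (rule bij_betw_byWitness[where f' = \<psi>])
    show "\<forall>\<sigma>\<in>P. \<psi> (\<phi> \<sigma>) = \<sigma>"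
    proof
      fix \<sigma> assume "\<sigma> \<in> P"
      then have s: "\<sigma> permutes {..<n}" unfolding P_def by simp
      show "\<psi> (\<phi> \<sigma>) = \<sigma>"
      proof
        fix i show "\<psi> (\<phi> \<sigma>) i = \<sigma> i"
        proof (cases "i < n")
          case True
          then have "\<sigma> i \<in> {..<n}" using permutes_in_image[OF s] by simp
          then show ?thesis using True g unfolding \<psi>_def \<phi>_def
            by (simp add: bij_betw_def inv_into_f_f)
        next
          case False then show ?thesis using permutes_not_in[OF s, of i] unfolding \<psi>_def by simp
        qed
      qed
    qed
    show "\<forall>L\<in>B. \<phi> (\<psi> L) = L"
    proof
      fix L assume "L \<in> B"
      then have L: "L \<in> {..<n} \<rightarrow>\<^sub>E C" by (simp add: B_def)
      show "\<phi> (\<psi> L) = L"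
      proof
        fix i show "\<phi> (\<psi> L) i = L i"
        proof (cases "i < n")
          case True
          then have "L i \<in> C" using L by auto
          then show ?thesis using True g unfolding \<psi>_def \<phi>_def
            by (simp add: bij_betw_def f_inv_into_f)
        next
          case False
          have "L i = undefined" using PiE_arb[OF L, of i] False by simp
          then show ?thesis unfolding \<phi>_def using False by simp
        qed
      qed
    qed
    show "\<phi> ` P \<subseteq> B"
    proof
      fix L assume "L \<in> \<phi> ` P"
      then obtain \<sigma> where s: "\<sigma> permutes {..<n}" "L = \<phi> \<sigma>" unfolding P_def by auto
      have b1: "bij_betw (g \<circ> \<sigma>) {..<n} C" using bij_betw_trans[OF permutes_imp_bij[OF s(1)] g] .
      have "bij_betw L {..<n} C" using b1 unfolding s(2) \<phi>_def
        by (rule bij_betw_cong[THEN iffD1, rotated]) simp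
      moreover have "L \<in> {..<n} \<rightarrow>\<^sub>E C" using b1 unfolding s(2) \<phi>_def bij_betw_def by auto
      ultimately show "L \<in> B" unfolding B_def by simp
    qed
    show "\<psi> ` B \<subseteq> P"
    proof
      fix \<sigma> assume "\<sigma> \<in> \<psi> ` B"
      then obtain L where L: "L \<in> B" "\<sigma> = \<psi> L" by auto
      have bL: "bij_betw L {..<n} C" using L(1) unfolding B_def by simp
      have "bij_betw (inv_into {..<n} g \<circ> L) {..<n} {..<n}" using bij_betw_trans[OF bL ig] .
      then have "bij_betw \<sigma> {..<n} {..<n}" unfolding L(2) \<psi>_def
        by (rule bij_betw_cong[THEN iffD1, rotated]) simp
      moreover have "\<And>x. x \<notin> {..<n} \<Longrightarrow> \<sigma> x = x" unfolding L(2) \<psi>_def by simp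
      ultimately show "\<sigma> \<in> P" unfolding P_def using bij_imp_permutes by blast
    qed
  qed
  then have "card B = card P" by (simp add: bij_betw_same_card)
  also have "\<dots> = fact n" unfolding P_def by (rule card_permutations) simp_all
  finally show ?thesis unfolding B_def .
qed

definition Mset :: "nat \<Rightarrow> nat \<Rightarrow> nat list set" where
  "Mset n d = {mu. length mu = n \<and> (\<forall>i\<in>set mu. 1 \<le> i) \<and> sum_list mu = d}"

lemma finite_Mset: "finite (Mset n d)"
proof -
  have "Mset n d \<subseteq> {xs. set xs \<subseteq> {..d} \<and> length xs = n}"
    unfolding Mset_def using member_le_sum_list by fastforce
  moreover have "finite {xs. set xs \<subseteq> {..d} \<and> length xs = n}"
    by (rule finite_lists_length_eq) simp
  ultimately show ?thesis by (rule finite_subset)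
qed

lemma lab_sum: assumes "set ts \<subseteq> transp_pairs d"
  shows "(\<Sum>mu\<in>Mset n d. card (labellings d (prod_transp ts) mu)) =
    (if n = card (cycles_of d (prod_transp ts)) then fact n else 0)"
proof -
  define p where "p = prod_transp ts"
  define C where "C = cycles_of d p"
  have pp: "p permutes {1..d}" unfolding p_def using prod_transp_permutes[OF assms] .
  have perm: "permutation p" unfolding p_def by (rule permutation_prod_transp)
  have Cdef: "C = orb p ` {1..d}" unfolding C_def cycles_of_orb ..
  have fC: "finite C" unfolding Cdef by simp
  have sub: "c \<subseteq> {1..d}" if cC: "c \<in> C" for c
  proof -
    obtain x where x: "x \<in> {1..d}" "c = orb p x" using cC unfolding Cdef by auto
    show ?thesis unfolding x(2) by (rule orb_closed[OF _ x(1)]) (use permutes_image[OF pp] in simp)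
  qed
  have fin: "finite c" if "c \<in> C" for c using sub[OF that] finite_subset by blast
  have ne: "c \<noteq> {}" if "c \<in> C" for c using that orb_self[of _ p] unfolding Cdef by blast
  have UC: "\<Union>C = {1..d}"
  proof
    show "\<Union>C \<subseteq> {1..d}" using sub by blast
    show "{1..d} \<subseteq> \<Union>C" unfolding Cdef using orb_self[of _ p] by blast
  qed
  have pw: "pairwise disjnt C" unfolding Cdef pairwise_def disjnt_def using orb_disj[OF perm] by blast
  have sumC: "sum card C = d" using card_Union_disjoint[OF pw fin] UC by simp
  define lab where "lab = labellings d p"
  have labC: "lab mu = {L \<in> {..<length mu} \<rightarrow>\<^sub>E C. bij_betw L {..<length mu} C \<and> (\<forall>i<length mu. card (L i) = mu ! i)}" for mu
    unfolding lab_def labellings_def C_def ..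
  have main: "(\<Sum>mu\<in>Mset n d. card (lab mu)) = (if n = card C then fact n else 0)"
  proof (cases "n = card C")
    case False
    have "lab mu = {}" if "mu \<in> Mset n d" for mu
    proof -
      have "length mu = n" using that unfolding Mset_def by simp
      then show ?thesis unfolding labC using False bij_betw_same_card by fastforce
    qed
    then show ?thesis using False by simp
  next
    case True
    define B where "B = {L \<in> {..<n} \<rightarrow>\<^sub>E C. bij_betw L {..<n} C}"
    have disj: "\<forall>mu\<in>Mset n d. \<forall>mu'\<in>Mset n d. mu \<noteq> mu' \<longrightarrow> lab mu \<inter> lab mu' = {}"
    proof (intro ballI impI)
      fix mu mu' assume m: "mu \<in> Mset n d" "mu' \<in> Mset n d" "mu \<noteq> mu'"
      show "lab mu \<inter> lab mu' = {}"
      proof (rule ccontr)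
        assume "lab mu \<inter> lab mu' \<noteq> {}"
        then obtain L where "L \<in> lab mu" "L \<in> lab mu'" by blast
        moreover have "length mu = n" "length mu' = n" using m unfolding Mset_def by auto
        ultimately have "mu = mu'" unfolding labC by (auto intro: nth_equalityI)
        then show False using m by simp
      qed
    qed
    have finlab: "\<forall>mu\<in>Mset n d. finite (lab mu)"
    proof
      fix mu
      have "lab mu \<subseteq> {..<length mu} \<rightarrow>\<^sub>E C" unfolding labC by auto
      then show "finite (lab mu)" using finite_PiE[of "{..<length mu}" "\<lambda>_. C"] fC finite_subset by blast
    qed
    have U: "(\<Union>mu\<in>Mset n d. lab mu) = B"
    proof (intro equalityI subsetI)
      fix L assume "L \<in> (\<Union>mu\<in>Mset n d. lab mu)"
      then obtain mu where "mu \<in> Mset n d" "L \<in> lab mu" by blast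
      then show "L \<in> B" unfolding labC B_def Mset_def by auto
    next
      fix L assume L: "L \<in> B"
      define mu where "mu = map (\<lambda>i. card (L i)) [0..<n]"
      have bL: "bij_betw L {..<n} C" and LC: "L \<in> {..<n} \<rightarrow>\<^sub>E C" using L unfolding B_def by auto
      have "sum_list mu = (\<Sum>i\<in>{..<n}. card (L i))"
        unfolding mu_def interv_sum_list_conv_sum_set_nat by (simp add: atLeast0LessThan)
      also have "\<dots> = sum card C" using sum.reindex_bij_betw[OF bL, of card] by simp
      finally have s: "sum_list mu = d" using sumC by simp
      have pos: "\<forall>i\<in>set mu. 1 \<le> i"
      proof
        fix k assume "k \<in> set mu"
        then obtain i where i: "i < n" "k = card (L i)" unfolding mu_def by auto
        then have "L i \<in> C" using LC by auto
        then show "1 \<le> k" using i fin ne by (simp add: Suc_leI card_gt_0_iff)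
      qed
      have "mu \<in> Mset n d" unfolding Mset_def mu_def using s pos unfolding mu_def by simp
      moreover have "L \<in> lab mu" unfolding labC mu_def using bL LC by simp
      ultimately show "L \<in> (\<Union>mu\<in>Mset n d. lab mu)" by blast
    qed
    have "(\<Sum>mu\<in>Mset n d. card (lab mu)) = card (\<Union>mu\<in>Mset n d. lab mu)"
      using card_UN_disjoint[OF finite_Mset finlab disj] by simp
    also have "\<dots> = fact n" unfolding U B_def using card_bij_ext[OF fC True[symmetric]] .
    finally show ?thesis using True by simp
  qed
  then show ?thesis unfolding lab_def C_def p_def .
qed



definition Tset :: "nat \<Rightarrow> nat \<Rightarrow> (nat \<times> nat) list set" where
  "Tset d m = {ts \<in> monotone_tuple d m. transitive_tuple d ts}"

lemma finite_transp_pairs: "finite (transp_pairs d)"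
  unfolding transp_pairs_def by (rule finite_subset[of _ "{1..d} \<times> {1..d}"]) auto

lemma finite_monotone_tuple: "finite (monotone_tuple d m)"
proof -
  have "monotone_tuple d m \<subseteq> {xs. set xs \<subseteq> transp_pairs d \<and> length xs = m}"
    unfolding monotone_tuple_def by auto
  moreover have "finite {xs. set xs \<subseteq> transp_pairs d \<and> length xs = m}"
    by (rule finite_lists_length_eq[OF finite_transp_pairs])
  ultimately show ?thesis by (rule finite_subset)
qed

lemma finite_Tset: "finite (Tset d m)"
  unfolding Tset_def using finite_monotone_tuple by simp

lemma finite_labellings: "finite (labellings d p mu)"
proof -
  have "labellings d p mu \<subseteq> {..<length mu} \<rightarrow>\<^sub>E cycles_of d p" unfolding labellings_def by auto
  moreover have "finite (cycles_of d p)" unfolding cycles_of_orb by simp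
  ultimately show ?thesis using finite_PiE[of "{..<length mu}" "\<lambda>_. cycles_of d p"] finite_subset by blast
qed

lemma hurwitz_eq:
  assumes mu: "mu \<in> Mset n d" and c: "2 * int g - 2 + int n + int d = int m"
  shows "monotone_hurwitz g mu = of_nat (\<Sum>ts\<in>Tset d m. card (labellings d (prod_transp ts) mu)) / fact d"
proof -
  have len: "length mu = n" and sl: "sum_list mu = d" using mu unfolding Mset_def by auto
  have "{(ts, L). ts \<in> monotone_tuple d m \<and> transitive_tuple d ts \<and> L \<in> labellings d (prod_transp ts) mu}
      = Sigma (Tset d m) (\<lambda>ts. labellings d (prod_transp ts) mu)" unfolding Tset_def by auto
  then have "card {(ts, L). ts \<in> monotone_tuple d m \<and> transitive_tuple d ts \<and> L \<in> labellings d (prod_transp ts) mu}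
      = (\<Sum>ts\<in>Tset d m. card (labellings d (prod_transp ts) mu))"
    using card_SigmaI[of "Tset d m" "\<lambda>ts. labellings d (prod_transp ts) mu"] finite_Tset finite_labellings by simp
  moreover have "\<not> (2 * int g - 2 + int n + int d < 0)" using c by simp
  moreover have "nat (2 * int g - 2 + int n + int d) = m" using c by simp
  ultimately show ?thesis unfolding monotone_hurwitz_def Let_def len sl by simp
qed

lemma fe_eq:
  assumes c: "2 * int g - 2 + int n + int d = int m"
  shows "free_energy_diag_coeff g n d / fact n =
    (\<Sum>ts\<in>Tset d m. if n = card (cycles_of d (prod_transp ts)) then 1 else 0) / fact d"
proof -
  have "free_energy_diag_coeff g n d =
      (\<Sum>mu\<in>Mset n d. of_nat (\<Sum>ts\<in>Tset d m. card (labellings d (prod_transp ts) mu)) / fact d)"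
    unfolding free_energy_diag_coeff_def Mset_def[symmetric] using hurwitz_eq[OF _ c] by (intro sum.cong) auto
  also have "\<dots> = of_nat (\<Sum>ts\<in>Tset d m. \<Sum>mu\<in>Mset n d. card (labellings d (prod_transp ts) mu)) / fact d"
    by (simp add: sum_divide_distrib[symmetric] sum.swap[of _ "Mset n d"])
  also have "\<dots> = of_nat (\<Sum>ts\<in>Tset d m. if n = card (cycles_of d (prod_transp ts)) then fact n else 0) / fact d"
  proof -
    have "set ts \<subseteq> transp_pairs d" if "ts \<in> Tset d m" for ts
      using that unfolding Tset_def monotone_tuple_def by auto
    then show ?thesis using lab_sum by (intro arg_cong[where f = "\<lambda>x. of_nat x / fact d"] sum.cong) auto
  qed
  also have "\<dots> = fact n * (\<Sum>ts\<in>Tset d m. if n = card (cycles_of d (prod_transp ts)) then 1 else 0) / fact d"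
    unfolding of_nat_sum sum_distrib_left by (intro arg_cong[where f = "\<lambda>x. x / fact d"] sum.cong refl) simp
  finally show ?thesis by simp
qed

lemma inner_one:
  assumes "ts \<in> Tset d m" "1 \<le> d"
  shows "(\<Sum>g\<in>{..m}. \<Sum>n\<in>{1..d}. if 2 * int g - 2 + int n + int d = int m
      then (if n = card (cycles_of d (prod_transp ts)) then 1 else 0) else (0::rat)) = 1"
proof -
  define N where "N = card (cycles_of d (prod_transp ts))"
  have r: "1 \<le> N" "N \<le> d" "N + d \<le> m + 2" "even (N + m + d)"
    using rh[of ts d m] assms unfolding Tset_def N_def by auto
  define g0 where "g0 = (m + 2 - N - d) div 2"
  have g0: "2 * g0 = m + 2 - N - d" using r unfolding g0_def by presburger
  have "(\<Sum>g\<in>{..m}. \<Sum>n\<in>{1..d}. if 2 * int g - 2 + int n + int d = int m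
      then (if n = N then 1 else 0) else (0::rat)) = (\<Sum>g\<in>{..m}. if g = g0 then 1 else 0)"
  proof (rule sum.cong[OF refl])
    fix g assume "g \<in> {..m}"
    have "(\<Sum>n\<in>{1..d}. if 2 * int g - 2 + int n + int d = int m then (if n = N then 1 else 0) else (0::rat))
        = (\<Sum>n\<in>{1..d}. if n = N then (if 2 * int g - 2 + int N + int d = int m then 1 else 0) else 0)"
      by (intro sum.cong) auto
    also have "\<dots> = (if 2 * int g - 2 + int N + int d = int m then 1 else 0)"
      using r by (simp add: sum.delta)
    also have "\<dots> = (if g = g0 then 1 else 0)" using g0 r by auto
    finally show "(\<Sum>n\<in>{1..d}. if 2 * int g - 2 + int n + int d = int m then (if n = N then 1 else 0) else (0::rat))
        = (if g = g0 then 1 else 0)" .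
  qed
  also have "\<dots> = 1" using g0 r by (simp add: sum.delta)
  finally show ?thesis unfolding N_def .
qed

lemma log_wave_coeff:
  "log_wave $ d $ m = (if d = 0 then 0 else of_nat (card (Tset d m)) / fact d)"
proof (cases "d = 0")
  case True then show ?thesis unfolding log_wave_def by simp
next
  case False
  have "log_wave $ d $ m = (\<Sum>g\<in>{..m}. \<Sum>n\<in>{1..d}.
        if 2 * int g - 2 + int n + int d = int m then free_energy_diag_coeff g n d / fact n else 0)"
    unfolding log_wave_def by simp
  also have "\<dots> = (\<Sum>g\<in>{..m}. \<Sum>n\<in>{1..d}.
        if 2 * int g - 2 + int n + int d = int m then
          (\<Sum>ts\<in>Tset d m. if n = card (cycles_of d (prod_transp ts)) then 1 else 0) / fact d else 0)"
    using fe_eq by (intro sum.cong) auto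
  also have "\<dots> = (\<Sum>g\<in>{..m}. \<Sum>n\<in>{1..d}. \<Sum>ts\<in>Tset d m.
        if 2 * int g - 2 + int n + int d = int m then
          (if n = card (cycles_of d (prod_transp ts)) then 1 else 0) / fact d else 0)"
    by (intro sum.cong refl) (simp add: sum_divide_distrib)
  also have "\<dots> = (\<Sum>g\<in>{..m}. \<Sum>ts\<in>Tset d m. \<Sum>n\<in>{1..d}.
        if 2 * int g - 2 + int n + int d = int m then
          (if n = card (cycles_of d (prod_transp ts)) then 1 else 0) / fact d else 0)"
    by (intro sum.cong refl sum.swap)
  also have "\<dots> = (\<Sum>ts\<in>Tset d m. \<Sum>g\<in>{..m}. \<Sum>n\<in>{1..d}.
        if 2 * int g - 2 + int n + int d = int m then
          (if n = card (cycles_of d (prod_transp ts)) then 1 else 0) / fact d else 0)"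
    by (rule sum.swap)
  also have "\<dots> = (\<Sum>ts\<in>Tset d m. (\<Sum>g\<in>{..m}. \<Sum>n\<in>{1..d}.
        if 2 * int g - 2 + int n + int d = int m then
          (if n = card (cycles_of d (prod_transp ts)) then 1 else 0) else 0)) / fact d"
    unfolding sum_divide_distrib by (intro sum.cong refl) simp
  also have "\<dots> = (\<Sum>ts\<in>Tset d m. 1) / fact d"
    using inner_one False by (intro arg_cong[where f = "\<lambda>x. x / fact d"] sum.cong) auto
  finally show ?thesis using False by simp
qed


lemma sorted_key_unique:
  assumes "sorted (map f xs)" "sorted (map f ys)"
    and "\<And>k. filter (\<lambda>y. f y = k) xs = filter (\<lambda>y. f y = k) ys"
  shows "xs = ys"
  using assms
proof (induction xs arbitrary: ys)
  case Nil
  show ?case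
  proof (cases ys)
    case (Cons y ys')
    have "filter (\<lambda>z. f z = f y) ys \<noteq> []" using Cons by simp
    then show ?thesis using Nil.prems(3)[of "f y"] by simp
  qed simp
next
  case (Cons x xs)
  have "filter (\<lambda>z. f z = f x) (x # xs) \<noteq> []" by simp
  then have "filter (\<lambda>z. f z = f x) ys \<noteq> []" using Cons.prems(3)[of "f x"] by metis
  then obtain y ys' where ys: "ys = y # ys'" by (cases ys) auto
  have keys: "f ` set (x # xs) = f ` set ys"
  proof -
    have "k \<in> f ` set (x # xs) \<longleftrightarrow> k \<in> f ` set ys" for k
    proof -
      have "k \<in> f ` set zs \<longleftrightarrow> filter (\<lambda>z. f z = k) zs \<noteq> []" for zs
        by (auto simp: filter_empty_conv)
      then show ?thesis using Cons.prems(3)[of k] by metis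
    qed
    then show ?thesis by blast
  qed
  have "f x \<le> f y"
  proof -
    have "f y \<in> f ` set (x # xs)" using keys ys by auto
    then show ?thesis using Cons.prems(1) by auto
  qed
  moreover have "f y \<le> f x"
  proof -
    have "f x \<in> f ` set ys" using keys by auto
    then show ?thesis using Cons.prems(2) ys by auto
  qed
  ultimately have fxy: "f x = f y" by simp
  have "x = y" using Cons.prems(3)[of "f x"] ys fxy by simp
  moreover have "xs = ys'"
  proof (rule Cons.IH)
    show "sorted (map f xs)" using Cons.prems(1) by simp
    show "sorted (map f ys')" using Cons.prems(2) ys by simp
    fix k show "filter (\<lambda>y. f y = k) xs = filter (\<lambda>y. f y = k) ys'"
      using Cons.prems(3)[of k] ys fxy \<open>x = y\<close> by (cases "f y = k") auto
  qed
  ultimately show ?case using ys by simp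
qed

lemma sort_key_split:
  assumes "sorted (map f xs)"
  shows "sort_key f (filter (\<lambda>x. Q (f x)) xs @ filter (\<lambda>x. \<not> Q (f x)) xs) = xs"
proof (rule sorted_key_unique[where f = f])
  show "sorted (map f (sort_key f (filter (\<lambda>x. Q (f x)) xs @ filter (\<lambda>x. \<not> Q (f x)) xs)))" by simp
  show "sorted (map f xs)" by fact
  fix k
  have "filter (\<lambda>y. f y = k) (filter (\<lambda>x. Q (f x)) xs @ filter (\<lambda>x. \<not> Q (f x)) xs) = filter (\<lambda>y. f y = k) xs"
  proof (cases "Q k")
    case True
    have "filter (\<lambda>y. f y = k) (filter (\<lambda>x. Q (f x)) xs) = filter (\<lambda>y. f y = k) xs"
      unfolding filter_filter using True by (intro filter_cong) auto
    moreover have "filter (\<lambda>y. f y = k) (filter (\<lambda>x. \<not> Q (f x)) xs) = []"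
      unfolding filter_filter using True by (auto simp: filter_empty_conv)
    ultimately show ?thesis by simp
  next
    case False
    have "filter (\<lambda>y. f y = k) (filter (\<lambda>x. \<not> Q (f x)) xs) = filter (\<lambda>y. f y = k) xs"
      unfolding filter_filter using False by (intro filter_cong) auto
    moreover have "filter (\<lambda>y. f y = k) (filter (\<lambda>x. Q (f x)) xs) = []"
      unfolding filter_filter using False by (auto simp: filter_empty_conv)
    ultimately show ?thesis by simp
  qed
  then show "filter (\<lambda>y. f y = k) (sort_key f (filter (\<lambda>x. Q (f x)) xs @ filter (\<lambda>x. \<not> Q (f x)) xs)) =
    filter (\<lambda>y. f y = k) xs" by (simp add: sort_key_stable)
qed

definition PA :: "nat set \<Rightarrow> (nat \<times> nat) set" where
  "PA A = {(a, b). a \<in> A \<and> b \<in> A \<and> a < b}"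

definition monoT :: "nat set \<Rightarrow> nat \<Rightarrow> (nat \<times> nat) list set" where
  "monoT A m = {ts. length ts = m \<and> set ts \<subseteq> PA A \<and> sorted (map snd ts)}"

definition connT :: "nat set \<Rightarrow> nat \<Rightarrow> (nat \<times> nat) list set" where
  "connT A m = {ts \<in> monoT A m. \<forall>x\<in>A. \<forall>y\<in>A. (x, y) \<in> (E ts)\<^sup>*}"

lemma finite_PA: "finite A \<Longrightarrow> finite (PA A)"
  unfolding PA_def by (rule finite_subset[of _ "A \<times> A"]) auto

lemma finite_monoT: assumes "finite A" shows "finite (monoT A m)"
proof -
  have "monoT A m \<subseteq> {xs. set xs \<subseteq> PA A \<and> length xs = m}" unfolding monoT_def by auto
  moreover have "finite {xs. set xs \<subseteq> PA A \<and> length xs = m}"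
    by (rule finite_lists_length_eq[OF finite_PA[OF assms]])
  ultimately show ?thesis by (rule finite_subset)
qed

lemma finite_connT: "finite A \<Longrightarrow> finite (connT A m)"
  unfolding connT_def using finite_monoT by simp

lemma E_mono: "set u \<subseteq> set ts \<Longrightarrow> E u \<subseteq> E ts"
  unfolding E_def by auto

lemma card_rec:
  assumes fA: "finite A" and tA: "t \<in> A"
  shows "card (monoT A m) = (\<Sum>S\<in>{S. S \<subseteq> A \<and> t \<in> S}. \<Sum>j\<in>{..m}.
            card (connT S j) * card (monoT (A - S) (m - j)))"
proof -
  define SS where "SS = {S. S \<subseteq> A \<and> t \<in> S}"
  define Tg where "Tg = (SIGMA S:SS. \<Union>j\<in>{..m}. connT S j \<times> monoT (A - S) (m - j))"
  define cp where "cp = (\<lambda>ts. {y \<in> A. (t, y) \<in> (E ts)\<^sup>*})"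
  define \<Phi> where "\<Phi> = (\<lambda>ts. (cp ts, filter (\<lambda>e. snd e \<in> cp ts) ts, filter (\<lambda>e. snd e \<notin> cp ts) ts))"
  define \<Psi> where "\<Psi> = (\<lambda>(S::nat set, u::(nat \<times> nat) list, v::(nat \<times> nat) list). sort_key snd (u @ v))"
  have fSS: "finite SS" unfolding SS_def using fA by (simp add: finite_subset[of _ "Pow A"] subset_eq)
  have edge: "a \<in> cp ts \<longleftrightarrow> b \<in> cp ts" if ts: "set ts \<subseteq> PA A" and ab: "(a, b) \<in> set ts" for ts a b
  proof -
    have ABA: "a \<in> A" "b \<in> A" using ts ab unfolding PA_def by auto
    have "(a, b) \<in> E ts" "(b, a) \<in> E ts" using ab unfolding E_def by auto
    then show ?thesis unfolding cp_def using ABA by (auto intro: rtrancl_into_rtrancl)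
  qed
  have reachA: "y \<in> A" if "(t, y) \<in> (E ts)\<^sup>*" "set ts \<subseteq> PA A" for ts y
    using that(1)
  proof (induction rule: rtrancl_induct)
    case base then show ?case using tA .
  next
    case (step y z) then show ?case using that(2) unfolding E_def PA_def by auto
  qed
  have Phi_in: "\<Phi> ts \<in> Tg" if ts: "ts \<in> monoT A m" for ts
  proof -
    define S where "S = cp ts"
    define u where "u = filter (\<lambda>e. snd e \<in> S) ts"
    define v where "v = filter (\<lambda>e. snd e \<notin> S) ts"
    have st: "set ts \<subseteq> PA A" and lt: "length ts = m" and so: "sorted (map snd ts)" using ts unfolding monoT_def by auto
    have SS: "S \<in> SS" unfolding SS_def S_def cp_def using tA by auto
    have uS: "set u \<subseteq> PA S"
    proof
      fix e assume "e \<in> set u"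
      then have e0: "e \<in> set ts" "snd e \<in> S" unfolding u_def by auto
      obtain a b where "e = (a, b)" by fastforce
      then have e: "e = (a, b)" "(a, b) \<in> set ts" "b \<in> S" using e0 by auto
      then have "a \<in> S" using edge[OF st e(2)] unfolding S_def by simp
      then show "e \<in> PA S" using e st unfolding PA_def by auto
    qed
    have vS: "set v \<subseteq> PA (A - S)"
    proof
      fix e assume "e \<in> set v"
      then have e0: "e \<in> set ts" "snd e \<notin> S" unfolding v_def by auto
      obtain a b where "e = (a, b)" by fastforce
      then have e: "e = (a, b)" "(a, b) \<in> set ts" "b \<notin> S" using e0 by auto
      then have "a \<notin> S" using edge[OF st e(2)] unfolding S_def by simp
      then show "e \<in> PA (A - S)" using e st unfolding PA_def by auto
    qed
    have reach_u: "(t, x) \<in> (E u)\<^sup>*" if "(t, x) \<in> (E ts)\<^sup>*" for x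
      using that
    proof (induction rule: rtrancl_induct)
      case base then show ?case by simp
    next
      case (step y z)
      have yS: "y \<in> S" unfolding S_def cp_def using step(1) reachA[OF step(1) st] by simp
      have zS: "z \<in> S" unfolding S_def cp_def using rtrancl_into_rtrancl[OF step(1) step(2)]
        reachA[OF rtrancl_into_rtrancl[OF step(1) step(2)] st] by simp
      from step(2) have "(y, z) \<in> set ts \<or> (z, y) \<in> set ts" unfolding E_def by auto
      then have "(y, z) \<in> E u" using yS zS unfolding u_def E_def by auto
      then show ?case using step(3) by (rule rtrancl_into_rtrancl[rotated])
    qed
    have uc: "\<forall>x\<in>S. \<forall>y\<in>S. (x, y) \<in> (E u)\<^sup>*"
    proof (intro ballI)
      fix x y assume "x \<in> S" "y \<in> S"
      then have "(t, x) \<in> (E u)\<^sup>*" "(t, y) \<in> (E u)\<^sup>*" using reach_u unfolding S_def cp_def by auto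
      then show "(x, y) \<in> (E u)\<^sup>*" using E_sym by (blast intro: rtrancl_trans)
    qed
    have len: "length u + length v = m" unfolding u_def v_def using sum_length_filter_compl lt by metis
    have "u \<in> connT S (length u)" unfolding connT_def monoT_def using uS uc so sorted_filter unfolding u_def by auto
    moreover have "v \<in> monoT (A - S) (m - length u)" unfolding monoT_def using vS so sorted_filter len unfolding v_def by auto
    moreover have "length u \<in> {..m}" using len by auto
    ultimately show ?thesis unfolding Tg_def \<Phi>_def S_def[symmetric] u_def[symmetric] v_def[symmetric] using SS by blast
  qed
  have Psi_in: "\<Psi> x \<in> monoT A m" if xT: "x \<in> Tg" for x
  proof -
    obtain S u v j where x: "x = (S, u, v)" "S \<in> SS" "j \<le> m" "u \<in> connT S j" "v \<in> monoT (A - S) (m - j)"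
      using xT unfolding Tg_def by auto
    have "set u \<subseteq> PA A" using x(2,4) unfolding SS_def connT_def monoT_def PA_def by auto
    moreover have "set v \<subseteq> PA A" using x(5) unfolding monoT_def PA_def by auto
    moreover have "length u + length v = m" using x(3-5) unfolding connT_def monoT_def by auto
    ultimately show ?thesis unfolding x \<Psi>_def monoT_def by auto
  qed
  have PsiPhi: "\<Psi> (\<Phi> ts) = ts" if "ts \<in> monoT A m" for ts
  proof -
    have "sorted (map snd ts)" using that unfolding monoT_def by simp
    then show ?thesis unfolding \<Phi>_def \<Psi>_def using sort_key_split[of snd ts "\<lambda>b. b \<in> cp ts"] by simp
  qed
  have PhiPsi: "\<Phi> (\<Psi> x) = x" if xT: "x \<in> Tg" for x
  proof -
    obtain S u v j where x: "x = (S, u, v)" "S \<in> SS" "j \<le> m" "u \<in> connT S j" "v \<in> monoT (A - S) (m - j)"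
      using xT unfolding Tg_def by auto
    define ts where "ts = sort_key snd (u @ v)"
    have sts: "set ts = set u \<union> set v" unfolding ts_def by simp
    have uS: "set u \<subseteq> PA S" and uc: "\<forall>x\<in>S. \<forall>y\<in>S. (x, y) \<in> (E u)\<^sup>*" and su: "sorted (map snd u)"
      using x(4) unfolding connT_def monoT_def by auto
    have vS: "set v \<subseteq> PA (A - S)" and sv: "sorted (map snd v)" using x(5) unfolding monoT_def by auto
    have SA: "S \<subseteq> A" "t \<in> S" using x(2) unfolding SS_def by auto
    have cpS: "cp ts = S"
    proof (intro equalityI subsetI)
      fix y assume "y \<in> cp ts"
      then have "(t, y) \<in> (E ts)\<^sup>*" unfolding cp_def by simp
      then show "y \<in> S"
      proof (induction rule: rtrancl_induct)
        case base then show ?case using SA by simp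
      next
        case (step y z)
        from step(2) have "(y, z) \<in> set u \<union> set v \<or> (z, y) \<in> set u \<union> set v" unfolding E_def sts by auto
        then show ?case using step(3) uS vS unfolding PA_def by auto
      qed
    next
      fix y assume "y \<in> S"
      then have "(t, y) \<in> (E u)\<^sup>*" using uc SA by auto
      moreover have "E u \<subseteq> E ts" using sts by (intro E_mono) auto
      ultimately have "(t, y) \<in> (E ts)\<^sup>*" using rtrancl_mono by blast
      then show "y \<in> cp ts" unfolding cp_def using \<open>y \<in> S\<close> SA by auto
    qed
    have h1: "\<forall>e\<in>set u. snd e \<in> S" using uS unfolding PA_def by auto
    have h2: "\<forall>e\<in>set v. snd e \<notin> S" using vS unfolding PA_def by auto
    have h3: "\<forall>e\<in>set u. \<not> snd e \<notin> S" using h1 by auto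
    have h4: "\<forall>e\<in>set v. \<not> snd e \<in> S" using h2 by auto
    have fu: "filter (\<lambda>e. snd e \<in> S) (u @ v) = u"
      by (simp only: filter_append filter_True[OF h1] filter_False[OF h4] append_Nil2)
    have fv: "filter (\<lambda>e. snd e \<notin> S) (u @ v) = v"
      by (simp only: filter_append filter_True[OF h2] filter_False[OF h3] append_Nil)
    show ?thesis unfolding x \<Psi>_def \<Phi>_def
      using cpS fu fv su sv unfolding ts_def by (simp add: filter_sort sort_key_id_if_sorted)
  qed
  have "bij_betw \<Phi> (monoT A m) Tg"
    by (rule bij_betw_byWitness[where f' = \<Psi>]) (use PsiPhi PhiPsi Phi_in Psi_in in auto)
  then have "card (monoT A m) = card Tg" by (rule bij_betw_same_card)
  also have "\<dots> = (\<Sum>S\<in>SS. card (\<Union>j\<in>{..m}. connT S j \<times> monoT (A - S) (m - j)))"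
    unfolding Tg_def
  proof (rule card_SigmaI[OF fSS], intro ballI)
    fix S assume "S \<in> SS"
    then have "finite S" "finite (A - S)" using fA unfolding SS_def by (auto intro: finite_subset)
    then show "finite (\<Union>j\<in>{..m}. connT S j \<times> monoT (A - S) (m - j))"
      using finite_connT finite_monoT by auto
  qed
  also have "\<dots> = (\<Sum>S\<in>SS. \<Sum>j\<in>{..m}. card (connT S j) * card (monoT (A - S) (m - j)))"
  proof (rule sum.cong[OF refl])
    fix S assume "S \<in> SS"
    then have fS: "finite S" "finite (A - S)" using fA unfolding SS_def by (auto intro: finite_subset)
    have "card (\<Union>j\<in>{..m}. connT S j \<times> monoT (A - S) (m - j)) =
        (\<Sum>j\<in>{..m}. card (connT S j \<times> monoT (A - S) (m - j)))"
    proof (rule card_UN_disjoint)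
      show "\<forall>j\<in>{..m}. finite (connT S j \<times> monoT (A - S) (m - j))"
        using finite_connT[OF fS(1)] finite_monoT[OF fS(2)] by auto
      show "\<forall>i\<in>{..m}. \<forall>j\<in>{..m}. i \<noteq> j \<longrightarrow>
          connT S i \<times> monoT (A - S) (m - i) \<inter> connT S j \<times> monoT (A - S) (m - j) = {}"
        unfolding connT_def monoT_def by auto
    qed simp
    then show "card (\<Union>j\<in>{..m}. connT S j \<times> monoT (A - S) (m - j)) =
        (\<Sum>j\<in>{..m}. card (connT S j) * card (monoT (A - S) (m - j)))"
      by (simp add: card_cartesian_product)
  qed
  finally show ?thesis unfolding SS_def .
qed


lemma PA_transp: "transp_pairs d = PA {1..d}"
  unfolding transp_pairs_def PA_def by auto

lemma monotone_tuple_monoT: "monotone_tuple d m = monoT {1..d} m"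
  unfolding monotone_tuple_def monoT_def PA_transp ..

lemma Tset_connT: "Tset d m = connT {1..d} m"
  unfolding Tset_def connT_def monotone_tuple_monoT transitive_iff ..

lemma sorted_map_smono:
  assumes "strict_mono_on X h" "set xs \<subseteq> X" "sorted xs" shows "sorted (map h xs)"
  using assms(2,3)
proof (induction xs)
  case (Cons x xs)
  have "h x \<le> h y" if "y \<in> set xs" for y
  proof -
    have "x \<le> y" "x \<in> X" "y \<in> X" using Cons.prems that by auto
    then show ?thesis using assms(1) by (cases "x = y") (auto dest: strict_mono_onD)
  qed
  then show ?case using Cons by auto
qed simp

lemma map_monoT:
  fixes X :: "nat set" and h :: "nat \<Rightarrow> nat"
  assumes h: "strict_mono_on X h" and ts: "ts \<in> monoT X m"
  shows "map (map_prod h h) ts \<in> monoT (h ` X) m"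
proof -
  have st: "set ts \<subseteq> PA X" and so: "sorted (map snd ts)" and l: "length ts = m"
    using ts unfolding monoT_def by auto
  have "set (map (map_prod h h) ts) \<subseteq> PA (h ` X)"
    using st h unfolding PA_def by (auto dest: strict_mono_onD)
  moreover have "sorted (map snd (map (map_prod h h) ts))"
  proof -
    have "map snd (map (map_prod h h) ts) = map h (map snd ts)" by (induction ts) auto
    moreover have "set (map snd ts) \<subseteq> X" using st unfolding PA_def by auto
    ultimately show ?thesis using sorted_map_smono[OF h _ so] by simp
  qed
  ultimately show ?thesis using l unfolding monoT_def by simp
qed

lemma map_reach:
  assumes "(x, y) \<in> (E ts)\<^sup>*" shows "(h x, h y) \<in> (E (map (map_prod h h) ts))\<^sup>*"
  using assms
proof (induction rule: rtrancl_induct)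
  case base then show ?case by simp
next
  case (step y z)
  have "(h y, h z) \<in> E (map (map_prod h h) ts)" using step(2) unfolding E_def by force
  then show ?case using step(3) by (rule rtrancl_into_rtrancl[rotated])
qed

lemma map_connT:
  fixes X :: "nat set" and h :: "nat \<Rightarrow> nat"
  assumes h: "strict_mono_on X h" and ts: "ts \<in> connT X m"
  shows "map (map_prod h h) ts \<in> connT (h ` X) m"
  using map_monoT[OF h] ts map_reach unfolding connT_def by fastforce

lemma strict_mono_on_inv:
  fixes X :: "nat set" and h :: "nat \<Rightarrow> nat"
  assumes h: "strict_mono_on X h"
  shows "strict_mono_on (h ` X) (inv_into X h)"
proof (rule strict_mono_onI)
  fix a b assume ab: "a \<in> h ` X" "b \<in> h ` X" "a < b"
  then obtain x y where xy: "x \<in> X" "y \<in> X" "a = h x" "b = h y" by auto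
  have inj: "inj_on h X" using h by (rule strict_mono_on_imp_inj_on)
  have "x < y"
  proof (rule ccontr)
    assume "\<not> x < y"
    then have "y \<le> x" by simp
    then have "h y \<le> h x" using h xy by (cases "x = y") (auto dest: strict_mono_onD)
    then show False using ab xy by simp
  qed
  then show "inv_into X h a < inv_into X h b" using xy inj by (simp add: inv_into_f_f)
qed

lemma map_inv_id:
  fixes X :: "nat set" and h :: "nat \<Rightarrow> nat"
  assumes h: "strict_mono_on X h" and "set ts \<subseteq> PA X"
  shows "map (map_prod (inv_into X h) (inv_into X h)) (map (map_prod h h) ts) = ts"
proof -
  have inj: "inj_on h X" using h by (rule strict_mono_on_imp_inj_on)
  have "map_prod (inv_into X h) (inv_into X h) (map_prod h h e) = e" if "e \<in> set ts" for e
    using that assms(2) inj unfolding PA_def by (cases e) (auto simp: inv_into_f_f)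
  then show ?thesis by (simp add: map_idI)
qed

lemma relabel_card:
  fixes X :: "nat set" and h :: "nat \<Rightarrow> nat"
  assumes h: "strict_mono_on X h"
  shows "card (monoT X m) = card (monoT (h ` X) m)" "card (connT X m) = card (connT (h ` X) m)"
proof -
  define g where "g = inv_into X h"
  have g: "strict_mono_on (h ` X) g" unfolding g_def by (rule strict_mono_on_inv[OF h])
  have gX: "g ` h ` X = X" unfolding g_def using strict_mono_on_imp_inj_on[OF h] by (simp add: image_inv_into_cancel)
  have inj: "inj_on h X" using h by (rule strict_mono_on_imp_inj_on)
  have hg: "map (map_prod h h) (map (map_prod g g) ts) = ts" if "set ts \<subseteq> PA (h ` X)" for ts
  proof -
    have "map_prod h h (map_prod g g e) = e" if "e \<in> set ts" for e
      using that \<open>set ts \<subseteq> PA (h ` X)\<close> inj unfolding PA_def g_def by (cases e) (auto simp: f_inv_into_f)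
    then show ?thesis by (simp add: map_idI)
  qed
  have "bij_betw (map (map_prod h h)) (monoT X m) (monoT (h ` X) m)"
  proof (rule bij_betw_byWitness[where f' = "map (map_prod g g)"])
    show "\<forall>a\<in>monoT X m. map (map_prod g g) (map (map_prod h h) a) = a"
      using map_inv_id[OF h] unfolding g_def monoT_def by auto
    show "\<forall>a'\<in>monoT (h ` X) m. map (map_prod h h) (map (map_prod g g) a') = a'"
      using hg unfolding monoT_def by auto
    show "map (map_prod h h) ` monoT X m \<subseteq> monoT (h ` X) m" using map_monoT[OF h] by auto
    show "map (map_prod g g) ` monoT (h ` X) m \<subseteq> monoT X m" using map_monoT[OF g] gX by auto
  qed
  then show "card (monoT X m) = card (monoT (h ` X) m)" by (rule bij_betw_same_card)
  have "bij_betw (map (map_prod h h)) (connT X m) (connT (h ` X) m)"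
  proof (rule bij_betw_byWitness[where f' = "map (map_prod g g)"])
    show "\<forall>a\<in>connT X m. map (map_prod g g) (map (map_prod h h) a) = a"
      using map_inv_id[OF h] unfolding g_def connT_def monoT_def by auto
    show "\<forall>a'\<in>connT (h ` X) m. map (map_prod h h) (map (map_prod g g) a') = a'"
      using hg unfolding connT_def monoT_def by auto
    show "map (map_prod h h) ` connT X m \<subseteq> connT (h ` X) m" using map_connT[OF h] by auto
    show "map (map_prod g g) ` connT (h ` X) m \<subseteq> connT X m" using map_connT[OF g] gX by auto
  qed
  then show "card (connT X m) = card (connT (h ` X) m)" by (rule bij_betw_same_card)
qed

lemma exists_enum:
  assumes "finite (A :: nat set)"
  obtains h where "strict_mono_on {1..card A} h" "h ` {1..card A} = A"
proof -
  define xs where "xs = sorted_list_of_set A"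
  have sw: "sorted_wrt (<) xs" unfolding xs_def by simp
  have sx: "set xs = A" and lx: "length xs = card A" unfolding xs_def using assms by auto
  define h where "h = (\<lambda>i. xs ! (i - 1))"
  have "strict_mono_on {1..card A} h"
  proof (rule strict_mono_onI)
    fix i j assume "i \<in> {1..card A}" "j \<in> {1..card A}" "i < j"
    then show "h i < h j" unfolding h_def using sorted_wrt_nth_less[OF sw, of "i - 1" "j - 1"] lx by auto
  qed
  moreover have "h ` {1..card A} = A"
  proof -
    have "h ` {1..card A} = (\<lambda>i. xs ! i) ` {..<length xs}"
    proof (intro equalityI subsetI)
      fix y assume "y \<in> h ` {1..card A}"
      then obtain i where "i \<in> {1..card A}" "y = xs ! (i - 1)" unfolding h_def by auto
      then show "y \<in> (\<lambda>i. xs ! i) ` {..<length xs}" using lx by (auto intro!: image_eqI[of _ _ "i - 1"])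
    next
      fix y assume "y \<in> (\<lambda>i. xs ! i) ` {..<length xs}"
      then obtain i where "i < length xs" "y = xs ! i" by auto
      then show "y \<in> h ` {1..card A}" unfolding h_def using lx by (auto intro!: image_eqI[of _ _ "Suc i"])
    qed
    also have "\<dots> = set xs" by (auto simp: in_set_conv_nth)
    finally show ?thesis using sx by simp
  qed
  ultimately show ?thesis using that by blast
qed

lemma card_monoT_std: "finite A \<Longrightarrow> card (monoT A m) = f_count (card A) m"
  using exists_enum relabel_card(1) unfolding f_count_def monotone_tuple_monoT by metis

lemma card_connT_std: "finite A \<Longrightarrow> card (connT A m) = card (Tset (card A) m)"
  using exists_enum relabel_card(2) unfolding Tset_connT by metis

lemma sum_subsets_containing:
  assumes fA: "finite A" and tA: "t \<in> A"
  shows "(\<Sum>S\<in>{S. S \<subseteq> A \<and> t \<in> S}. g (card S)) =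
    (\<Sum>k\<in>{1..card A}. (card A - 1 choose (k - 1)) * g k)"
proof -
  define B where "B = A - {t}"
  have fB: "finite B" unfolding B_def using fA by simp
  have cB: "card B = card A - 1" unfolding B_def using fA tA by simp
  have bij: "bij_betw (insert t) (Pow B) {S. S \<subseteq> A \<and> t \<in> S}"
    by (rule bij_betw_byWitness[where f' = "\<lambda>S. S - {t}"]) (use tA in \<open>auto simp: B_def\<close>)
  have "(\<Sum>S\<in>{S. S \<subseteq> A \<and> t \<in> S}. g (card S)) = (\<Sum>S\<in>Pow B. g (card (insert t S)))"
    using sum.reindex_bij_betw[OF bij, of "\<lambda>S. g (card S)"] by simp
  also have "\<dots> = (\<Sum>S\<in>Pow B. g (Suc (card S)))"
  proof (rule sum.cong[OF refl])
    fix S assume "S \<in> Pow B"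
    then have "t \<notin> S" "finite S" unfolding B_def using fA by (auto intro: finite_subset)
    then show "g (card (insert t S)) = g (Suc (card S))" by simp
  qed
  also have "\<dots> = (\<Sum>i\<in>{..card B}. \<Sum>S\<in>{S. S \<in> Pow B \<and> card S = i}. g (Suc (card S)))"
    by (rule sum.group[symmetric]) (use fB card_mono in auto)
  also have "\<dots> = (\<Sum>i\<in>{..card B}. (card B choose i) * g (Suc i))"
  proof (rule sum.cong[OF refl])
    fix i
    have "(\<Sum>S\<in>{S. S \<in> Pow B \<and> card S = i}. g (Suc (card S))) = (\<Sum>S\<in>{S. S \<subseteq> B \<and> card S = i}. g (Suc i))"
      by (intro sum.cong) auto
    also have "\<dots> = (card B choose i) * g (Suc i)" using n_subsets[OF fB, of i] by simp
    finally show "(\<Sum>S\<in>{S. S \<in> Pow B \<and> card S = i}. g (Suc (card S))) = (card B choose i) * g (Suc i)" .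
  qed
  also have "\<dots> = (\<Sum>k\<in>{1..card A}. (card A - 1 choose (k - 1)) * g k)"
  proof -
    have cA: "card A = Suc (card B)" using cB fA tA by (metis Suc_diff_1 card_gt_0_iff empty_iff)
    have "(\<Sum>k\<in>{1..card A}. (card A - 1 choose (k - 1)) * g k) = (\<Sum>i\<in>{..card B}. (card B choose i) * g (Suc i))"
      unfolding cA by (rule sum.reindex_bij_witness[where i = Suc and j = "\<lambda>k. k - 1"]) auto
    then show ?thesis by simp
  qed
  finally show ?thesis .
qed

lemma rec_formula:
  assumes "1 \<le> D"
  shows "f_count D m = (\<Sum>k\<in>{1..D}. (D - 1 choose (k - 1)) *
            (\<Sum>j\<in>{..m}. card (Tset k j) * f_count (D - k) (m - j)))"
proof -
  have "f_count D m = card (monoT {1..D} m)" unfolding f_count_def monotone_tuple_monoT ..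
  also have "\<dots> = (\<Sum>S\<in>{S. S \<subseteq> {1..D} \<and> D \<in> S}. \<Sum>j\<in>{..m}.
            card (connT S j) * card (monoT ({1..D} - S) (m - j)))"
    by (rule card_rec) (use assms in auto)
  also have "\<dots> = (\<Sum>S\<in>{S. S \<subseteq> {1..D} \<and> D \<in> S}. (\<lambda>k. \<Sum>j\<in>{..m}.
            card (Tset k j) * f_count (D - k) (m - j)) (card S))"
  proof (rule sum.cong[OF refl])
    fix S assume S: "S \<in> {S. S \<subseteq> {1..D} \<and> D \<in> S}"
    then have fS: "finite S" "finite ({1..D} - S)" by (auto intro: finite_subset)
    have cS: "card ({1..D} - S) = D - card S" using S by (simp add: card_Diff_subset fS(1))
    show "(\<Sum>j\<in>{..m}. card (connT S j) * card (monoT ({1..D} - S) (m - j))) =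
        (\<lambda>k. \<Sum>j\<in>{..m}. card (Tset k j) * f_count (D - k) (m - j)) (card S)"
      using card_connT_std[OF fS(1)] card_monoT_std[OF fS(2)] cS by simp
  qed
  also have "\<dots> = (\<Sum>k\<in>{1..D}. (D - 1 choose (k - 1)) *
            (\<Sum>j\<in>{..m}. card (Tset k j) * f_count (D - k) (m - j)))"
    using sum_subsets_containing[of "{1..D}" D] assms by simp
  finally show ?thesis .
qed


lemma sum_flip_m: "(\<Sum>j\<in>{..m}. g j (m - j)) = (\<Sum>j\<in>{0..m}. g (m - j) (j::nat))"
  by (rule sum.reindex_bij_witness[where i = "\<lambda>j. m - j" and j = "\<lambda>j. m - j"]) auto

lemma key_arith:
  fixes f c :: "nat \<Rightarrow> nat \<Rightarrow> nat"
  assumes rec: "f (Suc n) m = (\<Sum>k\<in>{1..Suc n}. (n choose (k - 1)) * (\<Sum>j\<in>{..m}. c k j * f (Suc n - k) (m - j)))"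
  shows "(of_nat (Suc n) :: rat) * (of_nat (f (Suc n) m) / fact (Suc n)) =
    (\<Sum>i\<in>{0..n}. \<Sum>j\<in>{0..m}. (of_nat (f i j) / fact i) *
        (of_nat (Suc (n - i)) * (of_nat (c (Suc (n - i)) (m - j)) / fact (Suc (n - i)))))"
proof -
  have "(of_nat (f (Suc n) m) :: rat) = (\<Sum>k\<in>{1..Suc n}. of_nat (n choose (k - 1)) *
      (\<Sum>j\<in>{..m}. of_nat (c k j) * of_nat (f (Suc n - k) (m - j))))"
    unfolding rec by simp
  also have "\<dots> = (\<Sum>i\<in>{0..n}. of_nat (n choose (n - i)) *
      (\<Sum>j\<in>{..m}. of_nat (c (Suc (n - i)) j) * of_nat (f i (m - j))))"
    by (rule sum.reindex_bij_witness[where i = "\<lambda>i. Suc (n - i)" and j = "\<lambda>k. Suc n - k"]) auto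
  finally have F: "(of_nat (f (Suc n) m) :: rat) = \<dots>" .
  have "(of_nat (Suc n) :: rat) * (of_nat (f (Suc n) m) / fact (Suc n)) = (of_nat (f (Suc n) m) :: rat) / fact n"
  proof -
    have nz: "(of_nat (Suc n) :: rat) \<noteq> 0" "(fact n :: rat) \<noteq> 0" by simp_all
    have "(fact (Suc n) :: rat) = of_nat (Suc n) * fact n" by (rule fact_Suc)
    then show ?thesis using nz by (simp del: of_nat_Suc fact_Suc)
  qed
  also have "\<dots> = (\<Sum>i\<in>{0..n}. (of_nat (n choose (n - i)) / fact n) *
      (\<Sum>j\<in>{..m}. of_nat (c (Suc (n - i)) j) * of_nat (f i (m - j))))"
    unfolding F by (simp add: sum_divide_distrib)
  also have "\<dots> = (\<Sum>i\<in>{0..n}. \<Sum>j\<in>{0..m}. (of_nat (f i j) / fact i) *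
        (of_nat (Suc (n - i)) * (of_nat (c (Suc (n - i)) (m - j)) / fact (Suc (n - i)))))"
  proof (rule sum.cong[OF refl])
    fix i assume i: "i \<in> {0..n}"
    have b: "(of_nat (n choose (n - i)) :: rat) / fact n = 1 / (fact i * fact (n - i))"
      using binomial_fact[of "n - i" n, where 'a = rat] i by (simp add: field_simps)
    have "(of_nat (n choose (n - i)) / fact n) *
      (\<Sum>j\<in>{..m}. of_nat (c (Suc (n - i)) j) * of_nat (f i (m - j))) =
      (\<Sum>j\<in>{..m}. of_nat (f i (m - j)) * of_nat (c (Suc (n - i)) j) / (fact i * fact (n - i)) :: rat)"
      unfolding b by (simp add: sum_distrib_left field_simps)
    also have "\<dots> = (\<Sum>j\<in>{0..m}. of_nat (f i j) * of_nat (c (Suc (n - i)) (m - j)) / (fact i * fact (n - i)))"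
      using sum_flip_m[of "\<lambda>a b. (of_nat (f i b) * of_nat (c (Suc (n - i)) a) / (fact i * fact (n - i)) :: rat)" m]
      by simp
    also have "\<dots> = (\<Sum>j\<in>{0..m}. (of_nat (f i j) / fact i) *
        (of_nat (Suc (n - i)) * (of_nat (c (Suc (n - i)) (m - j)) / fact (Suc (n - i)))))"
    proof (rule sum.cong[OF refl])
      fix j
      have "(fact (Suc (n - i)) :: rat) = of_nat (Suc (n - i)) * fact (n - i)" by (simp add: fact_Suc)
      then show "of_nat (f i j) * of_nat (c (Suc (n - i)) (m - j)) / (fact i * fact (n - i)) =
        (of_nat (f i j) / fact i) * (of_nat (Suc (n - i)) * (of_nat (c (Suc (n - i)) (m - j)) / fact (Suc (n - i))) :: rat)"
        by (simp add: field_simps del: of_nat_Suc)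
    qed
    finally show "((of_nat (n choose (n - i)) :: rat) / fact n) *
      (\<Sum>j\<in>{..m}. of_nat (c (Suc (n - i)) j) * of_nat (f i (m - j))) =
      (\<Sum>j\<in>{0..m}. (of_nat (f i j) / fact i) *
        (of_nat (Suc (n - i)) * (of_nat (c (Suc (n - i)) (m - j)) / fact (Suc (n - i)))))" .
  qed
  finally show ?thesis .
qed



definition Zr :: "rat fps fps" where
  "Zr = Abs_fps (\<lambda>d. if d = 0 then 1 else Abs_fps (\<lambda>m. of_nat (f_count d m) / fact d))"

lemma f_count_0: "f_count 0 m = (if m = 0 then 1 else 0)"
proof -
  have "transp_pairs 0 = {}" unfolding transp_pairs_def by auto
  then have "monotone_tuple 0 m = (if m = 0 then {[]} else {})"
    unfolding monotone_tuple_def by auto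
  then show ?thesis unfolding f_count_def by simp
qed

lemma Zr_nth: "Zr $ d $ m = of_nat (f_count d m) / fact d"
  unfolding Zr_def using f_count_0 by (cases "d = 0") auto

lemma of_nat_fps_mult_nth: "((of_nat k :: 'a::comm_ring_1 fps) * X) $ m = of_nat k * X $ m"
  by (simp flip: fps_of_nat)

lemma exp_deriv: "fps_deriv exp_series = exp_series"
proof (rule fps_ext)
  fix n
  have "(of_nat (Suc n) :: rat) * (1 / fact (Suc n)) = 1 / fact n"
    by (simp add: fact_Suc del: of_nat_Suc)
  then have "(of_nat (Suc n) :: rat fps) * fps_const (1 / fact (Suc n)) = fps_const (1 / fact n)"
    by (intro fps_ext) (simp add: of_nat_fps_mult_nth del: of_nat_Suc)
  then show "fps_deriv exp_series $ n = exp_series $ n" unfolding exp_series_def by simp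
qed

lemma log_wave_0: "log_wave $ 0 = 0"
  by (rule fps_ext) (simp add: log_wave_coeff)

lemma W_deriv: "fps_deriv wave_function = wave_function * fps_deriv log_wave"
  unfolding wave_function_def fps_compose_deriv[OF log_wave_0] exp_deriv ..

lemma W0: "wave_function $ 0 = 1"
  unfolding wave_function_def exp_series_def by simp

lemma Zr0: "Zr $ 0 = 1"
  unfolding Zr_def by simp

lemma Zr_deriv: "fps_deriv Zr = Zr * fps_deriv log_wave"
proof (rule fps_ext, rule fps_ext)
  fix n m
  have "fps_deriv Zr $ n $ m = (of_nat (Suc n) :: rat) * (of_nat (f_count (Suc n) m) / fact (Suc n))"
    by (simp add: of_nat_fps_mult_nth Zr_nth del: of_nat_Suc)
  also have "\<dots> = (\<Sum>i\<in>{0..n}. \<Sum>j\<in>{0..m}. (of_nat (f_count i j) / fact i) *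
        (of_nat (Suc (n - i)) * (of_nat (card (Tset (Suc (n - i)) (m - j))) / fact (Suc (n - i)))))"
    by (rule key_arith[where c = "\<lambda>k j. card (Tset k j)"]) (use rec_formula[of "Suc n" m] in simp)
  also have "\<dots> = (Zr * fps_deriv log_wave) $ n $ m"
  proof -
    have "(Zr * fps_deriv log_wave) $ n $ m = (\<Sum>i\<in>{0..n}. (Zr $ i * fps_deriv log_wave $ (n - i)) $ m)"
      by (simp add: fps_mult_nth fps_sum_nth)
    also have "\<dots> = (\<Sum>i\<in>{0..n}. \<Sum>j\<in>{0..m}. (of_nat (f_count i j) / fact i) *
        (of_nat (Suc (n - i)) * (of_nat (card (Tset (Suc (n - i)) (m - j))) / fact (Suc (n - i)))))"
    proof (rule sum.cong[OF refl])
      fix i assume "i \<in> {0..n}"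
      have "fps_deriv log_wave $ (n - i) = of_nat (Suc (n - i)) * log_wave $ Suc (n - i)"
        by (simp del: of_nat_Suc)
      then show "(Zr $ i * fps_deriv log_wave $ (n - i)) $ m = (\<Sum>j\<in>{0..m}. (of_nat (f_count i j) / fact i) *
        (of_nat (Suc (n - i)) * (of_nat (card (Tset (Suc (n - i)) (m - j))) / fact (Suc (n - i)))))"
      proof -
        assume dl: "fps_deriv log_wave $ (n - i) = of_nat (Suc (n - i)) * log_wave $ Suc (n - i)"
        have "(Zr $ i * fps_deriv log_wave $ (n - i)) $ m = (\<Sum>j\<in>{0..m}. Zr $ i $ j * (fps_deriv log_wave $ (n - i)) $ (m - j))"
          by (rule fps_mult_nth)
        also have "\<dots> = (\<Sum>j\<in>{0..m}. (of_nat (f_count i j) / fact i) *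
          (of_nat (Suc (n - i)) * (of_nat (card (Tset (Suc (n - i)) (m - j))) / fact (Suc (n - i)))))"
          by (intro sum.cong refl) (simp only: dl of_nat_fps_mult_nth Zr_nth log_wave_coeff, simp del: of_nat_Suc)
        finally show ?thesis .
      qed
    qed
    finally show ?thesis by simp
  qed
  finally show "fps_deriv Zr $ n $ m = (Zr * fps_deriv log_wave) $ n $ m" .
qed

lemma ode_unique:
  fixes X Y D :: "rat fps fps"
  assumes "X $ 0 = Y $ 0" "fps_deriv X = X * D" "fps_deriv Y = Y * D"
  shows "X = Y"
proof (rule fps_ext)
  fix n
  have "\<forall>k\<le>n. X $ k = Y $ k"
  proof (induction n)
    case 0 then show ?case using assms(1) by simp
  next
    case (Suc n)
    have "fps_deriv X $ n = fps_deriv Y $ n"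
    proof -
      have "(X * D) $ n = (Y * D) $ n" unfolding fps_mult_nth using Suc by (intro sum.cong) auto
      then show ?thesis using assms(2,3) by simp
    qed
    then have "(of_nat (Suc n) :: rat fps) * X $ Suc n = of_nat (Suc n) * Y $ Suc n"
      by (simp del: of_nat_Suc)
    moreover have "(of_nat (Suc n) :: rat fps) \<noteq> 0"
      by (simp flip: fps_of_nat del: of_nat_Suc)
    ultimately have "X $ Suc n = Y $ Suc n" by simp
    then show ?case using Suc by (auto simp: le_Suc_eq)
  qed
  then show "X $ n = Y $ n" by simp
qed

theorem proposition5p1:
  shows "wave_function = Abs_fps (\<lambda>d. if d = 0 then 1
           else Abs_fps (\<lambda>m. of_nat (f_count d m) / fact d))"
  using ode_unique[OF _ W_deriv Zr_deriv] W0 Zr0 unfolding Zr_def by simp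


end
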